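(* Let $M\ge1$ and let $\mathbf u$ be the unit lift. Then: (i) $\hat\Phi_{\mathbf u}$ is increasing and maps $(q_G,q_T]\cap\mathcal V$ bijectively onto $\mathcal V^*$; (ii) $\hat\Phi_{\mathbf u}(q_{KL})=q_{KL}^*$; (iii) $\hat\Phi_{\mathbf u}(I_{n+1}\cap\mathcal V)=I_n^*\cap\mathcal V^*$ for all $n\ge0$.
   Context: Sequences and quasi-greedy expansions. $\Omega_M=\{0,\dots,M\}^{\mathbb N}$, with lexicographic order $\prec$ and left shift $\sigma$. For $q\in(1,M+1]$, $\alpha(q)$ is the lexicographically largest $(a_i)\in\Omega_M$ not ending in $0^\infty$ with $\sum a_iq^{-i}=1$. $\alpha^*$ denotes this map for $M=1$. Word operations. For a word $c_1\dots c_k$: - $c_1\dots c_k^\pm=c_1\dots c_{k-1}(c_k\pm1)$; - $\overline{c_1\dots c_k}=(M-c_1)\dots(M-c_k)$, and $\overline{(c_i)}=(M-c_i)$. The set $\mathcal V$. $\mathbf V=\{(c_i):\overline{(c_i)}\preceq\sigma^n((c_i))\preceq(c_i)\ \forall n\ge0\}$ and $\mathcal V=\{q\in(1,M+1]:\alpha(q)\in\mathbf V\}$. Starred objects ($\mathcal V^*$, $q^*_{KL}$, $I_n^*$) denote the corresponding objects for $M=1$. The unit lift. $\mathbf u=k$ if $M=2k$, and $\mathbf u=(k+1)k$ if $M=2k+1$. Special bases. - $q_G$ is given by $\alpha(q_G)=\mathbf u^\infty$. - Let $\tau_i$ ($i\ge0$) be the parity of the binary digit sum of $i$. Put $\lambda_i=k+\tau_i-\tau_{i-1}$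 if $M=2k$, and $\lambda_i=k+\tau_i$ if $M=2k+1$. Then $\alpha(q_{KL})=(\lambda_i)_{i\ge1}$. - For $n\ge1$, $\alpha(q_n')=\lambda_1\dots\lambda_N(\overline{\lambda_1\dots\lambda_N}^+)^\infty$, where $N=2^{n-1}$ if $M$ is even and $N=2^n$ if $M$ is odd. - $q_T=q_1'$, $q_0'=M+1$, and $I_n=(q_{n+1}',q_n']$. These satisfy $q_G<q_{KL}<q_{n+1}'<q_n'\le q_T$, and $\alpha(q_T)=\mathbf u^+(\overline{\mathbf u})^\infty$. The graph. Let $G$ have vertices Start, $A$, $B$ and edges - $e_0$: Start$\to A$, - $e_1$: $A\to B$, - $e_2$: $B\to B$, - $e_3$: $B\to A$, - $e_4$: $A\to A$. It carries two labelings: - $\mathcal L_{\mathbf u}$: $e_0,e_3\mapsto\mathbf u^+$; $e_1\mapsto\overline{\mathbf u^+}$; $e_2\mapsto\mathbf u$; $e_4\mapsto\overline{\mathbf u}$; - $\mathcal L^*$: $e_0,e_3,e_4\mapsto1$; $e_1,e_2\mapsto0$. $X_{\mathbf u}$ is the set of label concatenations along infinite paths starting with $e_0$. The maps. $\Phi_{\mathbf u}:X_{\mathbf u}\to\{x\in\{0,1\}^{\mathbb N}:x_1=1\}$ replaces each $\mathcal L_{\mathbf u}$-label on the path by its $\mathcal L^*$-label. For $q\in(q_G,q_T]\cap\mathcal V$ one has $\alpha(q)\in X_{\mathbf u}$, and $\hat\Phi_{\mathbf u}(q):=(\alpha^* )^{-1}(\Phi_{\mathbf u}(\alpha(q)))$.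 *)

theory Defs
  imports Complex_Main
begin

text \<open>Sequences (a_i)_{i>=1} are represented as functions nat => nat, with
  index j standing for a_(j+1). Words are lists of digits.\<close>

definition lex_less :: "(nat \<Rightarrow> nat) \<Rightarrow> (nat \<Rightarrow> nat) \<Rightarrow> bool" where
  "lex_less a b \<longleftrightarrow> (\<exists>n. (\<forall>i<n. a i = b i) \<and> a n < b n)"

definition lex_le :: "(nat \<Rightarrow> nat) \<Rightarrow> (nat \<Rightarrow> nat) \<Rightarrow> bool" where
  "lex_le a b \<longleftrightarrow> a = b \<or> lex_less a b"

definition shift :: "nat \<Rightarrow> (nat \<Rightarrow> nat) \<Rightarrow> nat \<Rightarrow> nat" where
  "shift n a = (\<lambda>i. a (n + i))"

definition Omega :: "nat \<Rightarrow> (nat \<Rightarrow> nat) set" where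
  "Omega M = {a. \<forall>i. a i \<le> M}"

definition QG_cand :: "nat \<Rightarrow> real \<Rightarrow> (nat \<Rightarrow> nat) set" where
  "QG_cand M q = {a \<in> Omega M. (\<forall>N. \<exists>i\<ge>N. a i \<noteq> 0) \<and>
      (\<Sum>i. real (a i) / q ^ Suc i) = 1}"

definition alpha :: "nat \<Rightarrow> real \<Rightarrow> nat \<Rightarrow> nat" where
  "alpha M q = (THE a. a \<in> QG_cand M q \<and> (\<forall>b\<in>QG_cand M q. lex_le b a))"

definition seq_conj :: "nat \<Rightarrow> (nat \<Rightarrow> nat) \<Rightarrow> nat \<Rightarrow> nat" where
  "seq_conj M c = (\<lambda>i. M - c i)"

definition Vseq :: "nat \<Rightarrow> (nat \<Rightarrow> nat) set" where
  "Vseq M = {c. \<forall>n. lex_le (seq_conj M c) (shift n c) \<and> lex_le (shift n c) c}"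

definition Vset :: "nat \<Rightarrow> real set" where
  "Vset M = {q. 1 < q \<and> q \<le> real M + 1 \<and> alpha M q \<in> Vseq M}"

definition word_plus :: "nat list \<Rightarrow> nat list" where
  "word_plus w = butlast w @ [last w + 1]"

definition word_conj :: "nat \<Rightarrow> nat list \<Rightarrow> nat list" where
  "word_conj M w = map (\<lambda>c. M - c) w"

definition cyc :: "nat list \<Rightarrow> nat \<Rightarrow> nat" where
  "cyc w = (\<lambda>i. w ! (i mod length w))"

definition seq_app :: "nat list \<Rightarrow> (nat \<Rightarrow> nat) \<Rightarrow> nat \<Rightarrow> nat" where
  "seq_app p s = (\<lambda>i. if i < length p then p ! i else s (i - length p))"

definition unit_lift :: "nat \<Rightarrow> nat list" where
  "unit_lift M = (if even M then [M div 2] else [M div 2 + 1, M div 2])"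

definition wstart :: "(nat \<Rightarrow> nat list) \<Rightarrow> nat \<Rightarrow> nat" where
  "wstart w k = (\<Sum>j<k. length (w j))"

definition word_concat :: "(nat \<Rightarrow> nat list) \<Rightarrow> nat \<Rightarrow> nat" where
  "word_concat w i = (let k = (LEAST k. i < wstart w (Suc k)) in w k ! (i - wstart w k))"

datatype vertex = Start | VA | VB
datatype edge = E0 | E1 | E2 | E3 | E4

fun esrc :: "edge \<Rightarrow> vertex" where
  "esrc E0 = Start" | "esrc E1 = VA" | "esrc E2 = VB" | "esrc E3 = VB" | "esrc E4 = VA"

fun etgt :: "edge \<Rightarrow> vertex" where
  "etgt E0 = VA" | "etgt E1 = VB" | "etgt E2 = VB" | "etgt E3 = VA" | "etgt E4 = VA"

definition is_path :: "(nat \<Rightarrow> edge) \<Rightarrow> bool" where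
  "is_path p \<longleftrightarrow> p 0 = E0 \<and> (\<forall>i. etgt (p i) = esrc (p (Suc i)))"

fun Lu :: "nat \<Rightarrow> edge \<Rightarrow> nat list" where
  "Lu M E0 = word_plus (unit_lift M)"
| "Lu M E3 = word_plus (unit_lift M)"
| "Lu M E1 = word_conj M (word_plus (unit_lift M))"
| "Lu M E2 = unit_lift M"
| "Lu M E4 = word_conj M (unit_lift M)"

fun Lstar :: "edge \<Rightarrow> nat list" where
  "Lstar E0 = [1]" | "Lstar E3 = [1]" | "Lstar E4 = [1]"
| "Lstar E1 = [0]" | "Lstar E2 = [0]"

definition Xu :: "nat \<Rightarrow> (nat \<Rightarrow> nat) set" where
  "Xu M = {word_concat (\<lambda>i. Lu M (p i)) | p. is_path p}"

definition Phi_u :: "nat \<Rightarrow> (nat \<Rightarrow> nat) \<Rightarrow> nat \<Rightarrow> nat" where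
  "Phi_u M x = (let p = (SOME p. is_path p \<and> word_concat (\<lambda>i. Lu M (p i)) = x)
                in word_concat (\<lambda>i. Lstar (p i)))"

definition Phi_hat :: "nat \<Rightarrow> real \<Rightarrow> real" where
  "Phi_hat M q = (THE p. 1 < p \<and> p \<le> 2 \<and> alpha 1 p = Phi_u M (alpha M q))"

definition qG :: "nat \<Rightarrow> real" where
  "qG M = (THE q. 1 < q \<and> q \<le> real M + 1 \<and> alpha M q = cyc (unit_lift M))"

fun bitsum :: "nat \<Rightarrow> nat" where
  "bitsum n = (if n = 0 then 0 else n mod 2 + bitsum (n div 2))"

definition tau :: "nat \<Rightarrow> int" where
  "tau i = int (bitsum i mod 2)"

text \<open>lambda_i for i >= 1.\<close>
definition lam :: "nat \<Rightarrow> nat \<Rightarrow> nat" where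
  "lam M i = (if even M then nat (int (M div 2) + tau i - tau (i - 1))
              else nat (int (M div 2) + tau i))"

definition qKL :: "nat \<Rightarrow> real" where
  "qKL M = (THE q. 1 < q \<and> q \<le> real M + 1 \<and> alpha M q = (\<lambda>j. lam M (Suc j)))"

definition Nlen :: "nat \<Rightarrow> nat \<Rightarrow> nat" where
  "Nlen M n = (if even M then 2 ^ (n - 1) else 2 ^ n)"

definition qprime :: "nat \<Rightarrow> nat \<Rightarrow> real" where
  "qprime M n = (if n = 0 then real M + 1 else
     (let w = map (lam M) [1..<Nlen M n + 1] in
      THE q. 1 < q \<and> q \<le> real M + 1 \<and>
        alpha M q = seq_app w (cyc (word_plus (word_conj M w)))))"

definition qT :: "nat \<Rightarrow> real" where
  "qT M = qprime M 1"

definition Iint :: "nat \<Rightarrow> nat \<Rightarrow> real set" where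
  "Iint M n = {qprime M (Suc n)<..qprime M n}"

end

theory Submission
  imports Defs
begin

lemma lex_less_irrefl: "\<not> lex_less a a"
  by (auto simp: lex_less_def)

lemma lex_less_trans:
  assumes "lex_less a b" "lex_less b c" shows "lex_less a c"
proof -
  obtain n where n: "\<forall>i<n. a i = b i" "a n < b n" using assms(1) by (auto simp: lex_less_def)
  obtain m where m: "\<forall>i<m. b i = c i" "b m < c m" using assms(2) by (auto simp: lex_less_def)
  show ?thesis unfolding lex_less_def
  proof (cases "n \<le> m")
    case True
    then show "\<exists>n. (\<forall>i<n. a i = c i) \<and> a n < c n"
      using n m by (intro exI[of _ n]) (auto simp: le_less)
  next
    case False
    then show "\<exists>n. (\<forall>i<n. a i = c i) \<and> a n < c n"
      using n m by (intro exI[of _ m]) auto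
  qed
qed

lemma lex_less_asym: "lex_less a b \<Longrightarrow> \<not> lex_less b a"
  using lex_less_trans lex_less_irrefl by blast

lemma lex_total: "a \<noteq> b \<Longrightarrow> lex_less a b \<or> lex_less b a"
proof -
  assume "a \<noteq> b"
  then obtain j where "a j \<noteq> b j" by auto
  define n where "n = (LEAST j. a j \<noteq> b j)"
  have "a n \<noteq> b n" unfolding n_def by (rule LeastI[of _ j]) fact
  moreover have "\<forall>i<n. a i = b i" unfolding n_def using not_less_Least by blast
  ultimately show ?thesis unfolding lex_less_def
    by (metis linorder_neqE_nat)
qed

lemma lex_le_iff: "lex_le a b \<longleftrightarrow> \<not> lex_less b a"
  unfolding lex_le_def using lex_total lex_less_asym lex_less_irrefl by blast

lemma lex_le_refl[simp]: "lex_le a a" by (simp add: lex_le_def)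

lemma lex_le_trans: "lex_le a b \<Longrightarrow> lex_le b c \<Longrightarrow> lex_le a c"
  unfolding lex_le_def using lex_less_trans by blast

lemma lex_le_less_trans: "lex_le a b \<Longrightarrow> lex_less b c \<Longrightarrow> lex_less a c"
  unfolding lex_le_def using lex_less_trans by blast

lemma lex_less_le_trans: "lex_less a b \<Longrightarrow> lex_le b c \<Longrightarrow> lex_less a c"
  unfolding lex_le_def using lex_less_trans by blast

lemma lex_less_imp_le: "lex_less a b \<Longrightarrow> lex_le a b"
  by (simp add: lex_le_def)

lemma lex_le_antisym: "lex_le a b \<Longrightarrow> lex_le b a \<Longrightarrow> a = b"
  unfolding lex_le_def using lex_less_asym by blast

lemma lex_less_0: "lex_less a b \<Longrightarrow> a 0 \<le> b 0"
  unfolding lex_less_def by (metis less_imp_le_nat not_gr_zero order_refl)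

lemma lex_le_0: "lex_le a b \<Longrightarrow> a 0 \<le> b 0"
  unfolding lex_le_def using lex_less_0 by auto

lemma lex_lessI: "(\<And>i. i < n \<Longrightarrow> a i = b i) \<Longrightarrow> a n < b n \<Longrightarrow> lex_less a b"
  unfolding lex_less_def by blast

lemma lex_less_first: "a 0 < b 0 \<Longrightarrow> lex_less a b"
  by (rule lex_lessI[of 0]) auto

lemma shift_shift[simp]: "shift m (shift n a) = shift (n + m) a"
  by (simp add: shift_def add.assoc)

lemma shift_0[simp]: "shift 0 a = a"
  by (simp add: shift_def)

lemma shift_apply[simp]: "shift n a i = a (n + i)"
  by (simp add: shift_def)

lemma seq_conj_apply[simp]: "seq_conj M a i = M - a i"
  by (simp add: seq_conj_def)

lemma lex_less_prefix:
  assumes "lex_less a b"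
  shows "\<exists>n. \<forall>a' b'. (\<forall>i\<le>n. a' i = a i \<and> b' i = b i) \<longrightarrow> lex_less a' b'"
proof -
  obtain n where n: "\<forall>i<n. a i = b i" "a n < b n" using assms by (auto simp: lex_less_def)
  show ?thesis
    by (rule exI[of _ n]) (use n in \<open>auto simp: lex_less_def intro!: exI[of _ n]\<close>)
qed

lemma lex_conj_rev:
  assumes "lex_less a b" "a \<in> Omega M" "b \<in> Omega M"
  shows "lex_less (seq_conj M b) (seq_conj M a)"
proof -
  obtain n where n: "\<forall>i<n. a i = b i" "a n < b n" using assms by (auto simp: lex_less_def)
  have "b n \<le> M" using assms(3) by (auto simp: Omega_def)
  then show ?thesis using n by (intro lex_lessI[of n]) auto
qed

lemma lex_le_conj_rev:
  assumes "lex_le a b" "a \<in> Omega M" "b \<in> Omega M"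
  shows "lex_le (seq_conj M b) (seq_conj M a)"
  using assms lex_conj_rev unfolding lex_le_def by blast

lemma Omega_shift: "a \<in> Omega M \<Longrightarrow> shift n a \<in> Omega M"
  by (auto simp: Omega_def)

lemma Omega_conj: "seq_conj M a \<in> Omega M"
  by (auto simp: Omega_def)

lemma conj_conj: "a \<in> Omega M \<Longrightarrow> seq_conj M (seq_conj M a) = a"
  by (auto simp: Omega_def seq_conj_def fun_eq_iff)

definition val :: "real \<Rightarrow> (nat \<Rightarrow> nat) \<Rightarrow> real" where
  "val q a = (\<Sum>i. real (a i) / q ^ Suc i)"

lemma Omega_le: "a \<in> Omega M \<Longrightarrow> a i \<le> M"
  by (auto simp: Omega_def)

lemma geom_term: "1 < (q::real) \<Longrightarrow> real M * (1/q) * (1/q)^n = real M / q ^ Suc n"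
  by (simp add: power_one_over)

lemma summable_geom_M: "1 < (q::real) \<Longrightarrow> summable (\<lambda>n. real M * (1/q) * (1/q)^n)"
  by (intro summable_mult summable_geometric) auto

lemma summable_val:
  assumes "1 < q" "a \<in> Omega M"
  shows "summable (\<lambda>i. real (a i) / q ^ Suc i)"
proof (rule summable_comparison_test'[where N=0])
  show "summable (\<lambda>n. real M * (1/q) * (1/q)^n)" using summable_geom_M assms by blast
  fix n
  have "a n \<le> M" using assms Omega_le by blast
  then have "real (a n) / q ^ Suc n \<le> real M / q ^ Suc n"
    using assms by (intro divide_right_mono) auto
  then show "norm (real (a n) / q ^ Suc n) \<le> real M * (1/q) * (1/q)^n"
    using assms geom_term by simp
qed

lemma val_nonneg: "1 < q \<Longrightarrow> a \<in> Omega M \<Longrightarrow> 0 \<le> val q a"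
  unfolding val_def by (rule suminf_nonneg[OF summable_val]) auto

lemma val_bound:
  assumes "1 < q" "a \<in> Omega M"
  shows "val q a \<le> real M / (q - 1)"
proof -
  have "val q a \<le> (\<Sum>n. real M * (1/q) * (1/q)^n)"
    unfolding val_def
  proof (rule suminf_le[OF _ summable_val[OF assms] summable_geom_M[OF assms(1)]])
    fix n
    have "a n \<le> M" using assms Omega_le by blast
    then have "real (a n) / q ^ Suc n \<le> real M / q ^ Suc n"
      using assms by (intro divide_right_mono) auto
    then show "real (a n) / q ^ Suc n \<le> real M * (1/q) * (1/q)^n"
      using assms geom_term by simp
  qed
  also have "\<dots> = real M * (1/q) * (1 / (1 - 1/q))"
    using assms by (subst suminf_mult) (auto simp: suminf_geometric)
  also have "\<dots> = real M / (q - 1)" using assms by (simp add: field_simps)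
  finally show ?thesis .
qed

lemma val_split:
  assumes "1 < q" "a \<in> Omega M"
  shows "val q a = (\<Sum>i<n. real (a i) / q ^ Suc i) + val q (shift n a) / q ^ n"
proof -
  have s: "summable (\<lambda>i. real (a i) / q ^ Suc i)" by (rule summable_val[OF assms])
  have s2: "summable (\<lambda>i. real (shift n a i) / q ^ Suc i)"
    using summable_val[OF assms(1) Omega_shift[OF assms(2)]] .
  have "(\<Sum>i. real (a (i + n)) / q ^ Suc (i + n)) = (\<Sum>i. real (shift n a i) / q ^ Suc i / q^n)"
    by (simp add: shift_def add.commute power_add field_simps)
  also have "\<dots> = val q (shift n a) / q^n" unfolding val_def using s2 by (rule suminf_divide)
  finally show ?thesis unfolding val_def
    using suminf_split_initial_segment[OF s, of n] by simp
qed

lemma val_split_Suc: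
  assumes "1 < q" "a \<in> Omega M"
  shows "val q a = (\<Sum>i<n. real (a i) / q ^ Suc i) + (real (a n) + val q (shift (Suc n) a)) / q ^ Suc n"
  using val_split[OF assms, of "Suc n"] by (simp add: add_divide_distrib)

lemma val_pos:
  assumes "1 < q" "a \<in> Omega M" "a i \<noteq> 0"
  shows "0 < val q a"
  unfolding val_def using assms
  by (intro suminf_pos2[OF summable_val[OF assms(1,2)], of i]) auto

lemma val_tail_pos:
  assumes "1 < q" "a \<in> Omega M" "\<forall>N. \<exists>i\<ge>N. a i \<noteq> 0"
  shows "0 < val q (shift n a)"
proof -
  obtain i where "i \<ge> n" "a i \<noteq> 0" using assms(3) by blast
  then have "shift n a (i - n) \<noteq> 0" by simp
  then show ?thesis using val_pos[OF assms(1) Omega_shift[OF assms(2)]] by blast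
qed

lemma val_zero: "val q (\<lambda>_. 0) = 0"
  by (simp add: val_def)

lemma val_strict_anti:
  assumes "1 < q" "q < r" "a \<in> Omega M" "a i \<noteq> 0"
  shows "val r a < val q a"
proof -
  have "0 < (\<Sum>n. real (a n) / q ^ Suc n - real (a n) / r ^ Suc n)"
  proof (rule suminf_pos2[of _ i])
    show "summable (\<lambda>n. real (a n) / q ^ Suc n - real (a n) / r ^ Suc n)"
      using assms by (intro summable_diff summable_val[of _ _ M]) auto
    fix n
    have "q ^ Suc n \<le> r ^ Suc n" using assms by (intro power_mono) auto
    then show "0 \<le> real (a n) / q ^ Suc n - real (a n) / r ^ Suc n"
      using assms by (auto intro!: divide_left_mono)
    have "q ^ Suc i < r ^ Suc i" using assms by (intro power_strict_mono) auto
    then show "0 < real (a i) / q ^ Suc i - real (a i) / r ^ Suc i"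
      using assms by (auto intro!: divide_strict_left_mono)
  qed
  also have "\<dots> = val q a - val r a" unfolding val_def
    using assms by (intro suminf_diff[symmetric] summable_val[of _ _ M]) auto
  finally show ?thesis by simp
qed

lemma QG_cand_iff: "a \<in> QG_cand M q \<longleftrightarrow> a \<in> Omega M \<and> (\<forall>N. \<exists>i\<ge>N. a i \<noteq> 0) \<and> val q a = 1"
  by (simp add: QG_cand_def val_def)

fun grr :: "real \<Rightarrow> nat \<Rightarrow> real" where
  "grr q 0 = 1"
| "grr q (Suc n) = q * grr q n - real (nat \<lceil>q * grr q n\<rceil> - 1)"

definition gd :: "real \<Rightarrow> nat \<Rightarrow> nat" where
  "gd q n = nat \<lceil>q * grr q n\<rceil> - 1"

lemma grr_bounds:
  assumes "1 < q" "q \<le> real M + 1"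
  shows "0 < grr q n \<and> grr q n \<le> 1"
proof (induction n)
  case 0 then show ?case by simp
next
  case (Suc n)
  let ?t = "q * grr q n"
  have t: "0 < ?t" using Suc assms by simp
  have c1: "1 \<le> \<lceil>?t\<rceil>" using t by (simp add: order.strict_implies_order)
  have "int (nat \<lceil>?t\<rceil> - 1) = \<lceil>?t\<rceil> - 1" using c1 by linarith
  then have "real (nat \<lceil>?t\<rceil> - 1) = of_int \<lceil>?t\<rceil> - 1"
    by (metis of_int_1 of_int_diff of_int_of_nat_eq)
  moreover have "of_int \<lceil>?t\<rceil> - 1 < ?t" "?t \<le> of_int \<lceil>?t\<rceil>" by linarith+
  ultimately show ?case by simp
qed

lemma gd_props:
  assumes "1 < q" "q \<le> real M + 1"
  shows "gd q n \<le> M" "real (gd q n) < q * grr q n" "q * grr q n \<le> real (gd q n) + 1"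
    "grr q (Suc n) = q * grr q n - real (gd q n)"
proof -
  let ?t = "q * grr q n"
  have b: "0 < grr q n" "grr q n \<le> 1" using grr_bounds[OF assms] by auto
  have t: "0 < ?t" "?t \<le> real M + 1" using b assms
    by (auto intro: order.trans[OF mult_left_le[of "grr q n" q]])
  have c1: "1 \<le> \<lceil>?t\<rceil>" using t by (simp add: order.strict_implies_order)
  have "int (nat \<lceil>?t\<rceil> - 1) = \<lceil>?t\<rceil> - 1" using c1 by linarith
  then have r: "real (nat \<lceil>?t\<rceil> - 1) = of_int \<lceil>?t\<rceil> - 1"
    by (metis of_int_1 of_int_diff of_int_of_nat_eq)
  have "\<lceil>?t\<rceil> \<le> int M + 1" using t(2) by (simp add: ceiling_le_iff)
  then show "gd q n \<le> M" unfolding gd_def by linarith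
  show "real (gd q n) < ?t" "?t \<le> real (gd q n) + 1" unfolding gd_def r by linarith+
  show "grr q (Suc n) = q * grr q n - real (gd q n)" by (simp add: gd_def)
qed

lemma gd_Omega: "1 < q \<Longrightarrow> q \<le> real M + 1 \<Longrightarrow> gd q \<in> Omega M"
  using gd_props(1) by (auto simp: Omega_def)

lemma gd_partial:
  assumes "1 < q" "q \<le> real M + 1"
  shows "(\<Sum>i<n. real (gd q i) / q ^ Suc i) + grr q n / q ^ n = 1"
proof (induction n)
  case 0 then show ?case by simp
next
  case (Suc n)
  have "grr q (Suc n) / q ^ Suc n = grr q n / q ^ n - real (gd q n) / q ^ Suc n"
    using gd_props(4)[OF assms, of n] assms by (simp add: field_simps)
  then show ?case using Suc by simp
qed

lemma gd_val_shift:
  assumes "1 < q" "q \<le> real M + 1"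
  shows "val q (gd q) = 1" "val q (shift n (gd q)) = grr q n"
proof -
  have lim0: "(\<lambda>n. grr q n / q ^ n) \<longlonglongrightarrow> 0"
  proof (rule real_tendsto_sandwich[where f="\<lambda>_. 0" and h="\<lambda>n. (1/q)^n"])
    show "\<forall>\<^sub>F n in sequentially. grr q n / q ^ n \<le> (1 / q) ^ n"
      using grr_bounds[OF assms] assms by (auto simp: power_one_over divide_right_mono)
    show "\<forall>\<^sub>F n in sequentially. 0 \<le> grr q n / q ^ n"
      using grr_bounds[OF assms] assms by (intro always_eventually allI) (simp add: less_imp_le)
    show "(\<lambda>n. (1 / q) ^ n) \<longlonglongrightarrow> 0" using assms by (intro LIMSEQ_power_zero) auto
  qed auto
  have "(\<lambda>i. real (gd q i) / q ^ Suc i) sums 1"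
    unfolding sums_def
  proof -
    have "(\<lambda>n. 1 - grr q n / q ^ n) \<longlonglongrightarrow> 1 - 0" by (intro tendsto_intros lim0)
    moreover have "(\<lambda>n. 1 - grr q n / q ^ n) = (\<lambda>n. \<Sum>i<n. real (gd q i) / q ^ Suc i)"
      using gd_partial[OF assms] by (auto simp: fun_eq_iff algebra_simps)
    ultimately show "(\<lambda>n. \<Sum>i<n. real (gd q i) / q ^ Suc i) \<longlonglongrightarrow> 1" by simp
  qed
  then show v: "val q (gd q) = 1" unfolding val_def by (simp add: sums_iff)
  have "1 = (\<Sum>i<n. real (gd q i) / q ^ Suc i) + val q (shift n (gd q)) / q ^ n"
    using val_split[OF assms(1) gd_Omega[OF assms], of n] v by simp
  then have "val q (shift n (gd q)) / q ^ n = grr q n / q ^ n"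
    using gd_partial[OF assms, of n] by linarith
  then show "val q (shift n (gd q)) = grr q n" using assms by (simp add: divide_cancel_right)
qed

lemma gd_inf_nonzero:
  assumes "1 < q" "q \<le> real M + 1"
  shows "\<forall>N. \<exists>i\<ge>N. gd q i \<noteq> 0"
proof (rule ccontr)
  assume "\<not> ?thesis"
  then obtain N where N: "\<forall>i\<ge>N. gd q i = 0" by auto
  then have "shift N (gd q) = (\<lambda>_. 0)" by (auto simp: fun_eq_iff)
  then have "grr q N = 0" using gd_val_shift(2)[OF assms, of N] val_zero by simp
  then show False using grr_bounds[OF assms, of N] by simp
qed

lemma K_max:
  assumes q: "1 < q" and c: "c \<in> QG_cand M q" and tl: "\<forall>n. val q (shift n c) \<le> 1"
      and b: "b \<in> QG_cand M q"
  shows "lex_le b c"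
proof (rule ccontr)
  assume "\<not> lex_le b c"
  then have "lex_less c b" by (simp add: lex_le_iff)
  then obtain n where n: "\<forall>i<n. c i = b i" "c n < b n" unfolding lex_less_def by auto
  let ?S = "\<Sum>i<n. real (c i) / q ^ Suc i"
  have Sb: "?S = (\<Sum>i<n. real (b i) / q ^ Suc i)" using n(1) by (intro sum.cong) auto
  have cO: "c \<in> Omega M" and bO: "b \<in> Omega M" using b c by (auto simp: QG_cand_iff)
  have vc: "val q c = ?S + (real (c n) + val q (shift (Suc n) c)) / q ^ Suc n"
    by (rule val_split_Suc[OF q cO])
  have vb: "val q b = ?S + (real (b n) + val q (shift (Suc n) b)) / q ^ Suc n"
    using val_split_Suc[OF q bO] Sb by simp
  have pos: "val q (shift (Suc n) b) > 0"
    using b q by (intro val_tail_pos[of _ _ M]) (auto simp: QG_cand_iff)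
  have "real (c n) + val q (shift (Suc n) c) < real (b n) + val q (shift (Suc n) b)"
    using tl[rule_format, of "Suc n"] n(2) pos by linarith
  then have "val q c < val q b" unfolding vc vb using q by (intro add_strict_left_mono divide_strict_right_mono) auto
  then show False using b c by (simp add: QG_cand_iff)
qed

lemma alpha_eqI:
  assumes q: "1 < q" and c: "c \<in> QG_cand M q" and tl: "\<forall>n. val q (shift n c) \<le> 1"
  shows "alpha M q = c"
  unfolding alpha_def
proof (rule the_equality)
  show "c \<in> QG_cand M q \<and> (\<forall>b\<in>QG_cand M q. lex_le b c)" using K_max[OF q c tl] c by blast
  fix a assume "a \<in> QG_cand M q \<and> (\<forall>b\<in>QG_cand M q. lex_le b a)"
  then show "a = c" using K_max[OF q c tl] c lex_le_antisym by blast
qed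

lemma alpha_gd:
  assumes "1 < q" "q \<le> real M + 1"
  shows "alpha M q = gd q"
proof (rule alpha_eqI[OF assms(1)])
  show "gd q \<in> QG_cand M q"
    using gd_Omega[OF assms] gd_inf_nonzero[OF assms] gd_val_shift(1)[OF assms] by (simp add: QG_cand_iff)
  show "\<forall>n. val q (shift n (gd q)) \<le> 1" using gd_val_shift(2)[OF assms] grr_bounds[OF assms] by simp
qed

lemma alpha_props:
  assumes "1 < q" "q \<le> real M + 1"
  shows "alpha M q \<in> Omega M" "\<forall>N. \<exists>i\<ge>N. alpha M q i \<noteq> 0" "val q (alpha M q) = 1"
    "\<And>n. val q (shift n (alpha M q)) \<le> 1"
  using alpha_gd[OF assms] gd_Omega[OF assms] gd_inf_nonzero[OF assms] gd_val_shift[OF assms]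
    grr_bounds[OF assms] by auto

lemma alpha_mono:
  assumes q: "1 < q" "q < r" "r \<le> real M + 1"
  shows "lex_less (alpha M q) (alpha M r)"
proof (rule ccontr)
  let ?a = "alpha M q" and ?c = "alpha M r"
  have qM: "q \<le> real M + 1" using q by simp
  have r1: "1 < r" using q by simp
  note A = alpha_props[OF q(1) qM] and C = alpha_props[OF r1 q(3)]
  obtain i where i: "?a i \<noteq> 0" using A(2) by blast
  have lt: "val r ?a < val q ?a" by (rule val_strict_anti[OF q(1,2) A(1) i])
  assume "\<not> lex_less ?a ?c"
  then have "lex_le ?c ?a" by (simp add: lex_le_iff)
  then consider "?c = ?a" | "lex_less ?c ?a" unfolding lex_le_def by blast
  then show False
  proof cases
    case 1 then show False using lt A(3) C(3) by simp
  next
    case 2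
    then obtain n where n: "\<forall>i<n. ?c i = ?a i" "?c n < ?a n" unfolding lex_less_def by auto
    let ?S = "\<Sum>i<n. real (?c i) / r ^ Suc i"
    have Sa: "?S = (\<Sum>i<n. real (?a i) / r ^ Suc i)" using n(1) by (intro sum.cong) auto
    have vc: "val r ?c = ?S + (real (?c n) + val r (shift (Suc n) ?c)) / r ^ Suc n"
      by (rule val_split_Suc[OF r1 C(1)])
    have va: "val r ?a = ?S + (real (?a n) + val r (shift (Suc n) ?a)) / r ^ Suc n"
      using val_split_Suc[OF r1 A(1)] Sa by simp
    have "val r (shift (Suc n) ?a) \<ge> 0" using val_nonneg[OF r1 Omega_shift[OF A(1)]] .
    then have "real (?c n) + val r (shift (Suc n) ?c) \<le> real (?a n) + val r (shift (Suc n) ?a)"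
      using C(4)[of "Suc n"] n(2) by linarith
    then have "val r ?c \<le> val r ?a" unfolding vc va using r1 by (intro add_left_mono divide_right_mono) auto
    then show False using lt A(3) C(3) by simp
  qed
qed

lemma alpha_less_iff:
  assumes "1 < q" "q \<le> real M + 1" "1 < r" "r \<le> real M + 1"
  shows "lex_less (alpha M q) (alpha M r) \<longleftrightarrow> q < r"
proof
  assume l: "lex_less (alpha M q) (alpha M r)"
  show "q < r"
  proof (rule ccontr)
    assume "\<not> q < r"
    then consider "q = r" | "r < q" by linarith
    then show False
    proof cases
      case 1 then show False using l lex_less_irrefl by simp
    next
      case 2 then show False using alpha_mono[of r q M] assms l lex_less_asym by blast
    qed
  qed
qed (use alpha_mono assms in blast)

lemma alpha_le_iff:
  assumes "1 < q" "q \<le> real M + 1" "1 < r" "r \<le> real M + 1"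
  shows "lex_le (alpha M q) (alpha M r) \<longleftrightarrow> q \<le> r"
  using alpha_less_iff[OF assms(3,4,1,2)] by (simp add: lex_le_iff not_less)

lemma alpha_inj:
  assumes "1 < q" "q \<le> real M + 1" "1 < r" "r \<le> real M + 1" "alpha M q = alpha M r"
  shows "q = r"
  using alpha_le_iff[OF assms(1-4)] alpha_le_iff[OF assms(3,4,1,2)] assms(5) by simp

lemma parry_tail:
  assumes q: "1 < q" and c: "c \<in> Omega M" and v: "val q c = 1"
    and sh: "\<forall>n. lex_le (shift n c) c"
  shows "val q (shift m c) \<le> 1"
proof -
  define f where "f n = val q (shift n c)" for n
  define S where "S = (SUP n. f n)"
  have bdd: "bdd_above (range f)" unfolding f_def
    using val_bound[OF q Omega_shift[OF c]] by (intro bdd_aboveI2) blast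
  have fS: "f n \<le> S" for n unfolding S_def using bdd by (rule cSUP_upper[rotated]) auto
  have key: "f m \<le> max 1 (1 + (S - 1) / q)" for m
  proof -
    consider "shift m c = c" | "lex_less (shift m c) c" using sh unfolding lex_le_def by blast
    then show ?thesis
    proof cases
      case 1 then show ?thesis using v by (simp add: f_def)
    next
      case 2
      then obtain j where j: "\<forall>i<j. c (m+i) = c i" "c (m+j) < c j" unfolding lex_less_def by auto
      let ?S = "\<Sum>i<j. real (c i) / q ^ Suc i"
      let ?Q = "q ^ Suc j"
      have Q: "q \<le> ?Q" "0 < ?Q" using q by (auto intro: self_le_power)
      have "(\<Sum>i<j. real (shift m c i) / q ^ Suc i) = ?S" using j(1) by (intro sum.cong) auto
      then have vs: "f m = ?S + (real (c (m+j)) + f (m + Suc j)) / ?Q"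
        using val_split_Suc[OF q Omega_shift[OF c], of "m" j] unfolding f_def by simp
      have vc: "1 = ?S + (real (c j) + f (Suc j)) / ?Q"
        using val_split_Suc[OF q c, of j] v unfolding f_def by simp
      have f0: "f (Suc j) \<ge> 0" unfolding f_def by (rule val_nonneg[OF q Omega_shift[OF c]])
      have "real (c (m+j)) + f (m + Suc j) \<le> (real (c j) + f (Suc j)) + (S - 1)"
        using j(2) fS[of "m+Suc j"] f0 by (simp add: of_nat_less_iff[symmetric])
      then have "(real (c (m+j)) + f (m + Suc j)) / ?Q \<le> (real (c j) + f (Suc j)) / ?Q + (S - 1) / ?Q"
        using Q by (simp add: divide_right_mono add_divide_distrib[symmetric])
      then have fm: "f m \<le> 1 + (S - 1) / ?Q" using vs vc by linarith
      show ?thesis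
      proof (cases "S \<le> 1")
        case True
        then have "(S - 1) / ?Q \<le> 0" using Q by (simp add: divide_nonpos_pos)
        then show ?thesis using fm by simp
      next
        case False
        then have "(S - 1) / ?Q \<le> (S - 1) / q" using Q q by (intro divide_left_mono) auto
        then show ?thesis using fm by simp
      qed
    qed
  qed
  have "(SUP n. f n) \<le> max 1 (1 + (S - 1) / q)" by (rule cSUP_least) (use key in auto)
  then have "S \<le> max 1 (1 + (S - 1) / q)" by (simp add: S_def)
  then have S1: "S \<le> 1"
  proof -
    assume a: "S \<le> max 1 (1 + (S - 1) / q)"
    show "S \<le> 1"
    proof (rule ccontr)
      assume "\<not> S \<le> 1"
      then have s1: "S > 1" by simp
      then have "S \<le> 1 + (S - 1) / q" using a by (simp add: max_def split: if_splits)
      then have "(S - 1) * q \<le> (S - 1)" using q by (simp add: field_simps)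
      then show False using s1 q by (simp add: mult_le_cancel_left1)
    qed
  qed
  show ?thesis using fS[of m] S1 unfolding f_def by simp
qed

lemma summable_powser_Omega:
  assumes "c \<in> Omega M" "\<bar>y::real\<bar> < 1"
  shows "summable (\<lambda>n. real (c n) * y ^ n)"
proof (rule summable_comparison_test'[where N=0])
  show "summable (\<lambda>n. real M * \<bar>y\<bar> ^ n)" using assms by (intro summable_mult summable_geometric) auto
  fix n
  have "c n \<le> M" using assms Omega_le by blast
  then show "norm (real (c n) * y ^ n) \<le> real M * \<bar>y\<bar> ^ n"
    by (simp add: abs_mult power_abs mult_right_mono)
qed

lemma val_powser:
  assumes "1 < q" "c \<in> Omega M"
  shows "val q c = (1/q) * (\<Sum>n. real (c n) * (1/q) ^ n)"
proof -
  have "val q c = (\<Sum>n. (1/q) * (real (c n) * (1/q) ^ n))"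
    unfolding val_def by (simp add: power_one_over)
  also have "\<dots> = (1/q) * (\<Sum>n. real (c n) * (1/q) ^ n)"
    using assms by (intro suminf_mult summable_powser_Omega) auto
  finally show ?thesis .
qed

lemma val_isCont:
  assumes "1 < x" "c \<in> Omega M"
  shows "isCont (\<lambda>q. (1/q) * (\<Sum>n. real (c n) * (1/q) ^ n)) x"
proof -
  define K where "K = (1 + 1/x) / 2"
  have K: "1/x < K" "K < 1" "0 < K" using assms by (auto simp: K_def field_simps)
  have "isCont (\<lambda>y. \<Sum>n. real (c n) * y ^ n) (1/x)"
  proof (rule isCont_powser)
    show "summable (\<lambda>n. real (c n) * K ^ n)"
      using K assms by (intro summable_powser_Omega) auto
    show "norm (1/x) < norm K" using K assms by auto
  qed
  then have "isCont (\<lambda>q. \<Sum>n. real (c n) * (1/q) ^ n) x"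
    using assms isCont_o2[where f="\<lambda>q. 1/q" and a=x and g="\<lambda>y. \<Sum>n. real (c n) * y ^ n"]
    by (auto intro!: continuous_intros)
  then show ?thesis using assms by (auto intro!: continuous_intros)
qed

lemma exists_val_one:
  assumes M: "M \<ge> 1" and c: "c \<in> Omega M" and c0: "c 0 \<ge> 1" and j: "j \<ge> 1" "c j \<noteq> 0"
  shows "\<exists>q. 1 < q \<and> q \<le> real M + 1 \<and> val q c = 1"
proof -
  define q0 where "q0 = root (Suc j) 2"
  have q0: "1 < q0" "q0 ^ Suc j = 2" unfolding q0_def by (auto intro: real_root_pow_pos2 simp del: power_Suc)
  have "q0 \<le> q0 ^ Suc j" using q0 by (intro self_le_power) auto
  then have q02: "q0 \<le> 2" using q0(2) by (simp del: power_Suc)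
  have "1 \<le> val q0 c"
  proof -
    have s: "summable (\<lambda>i. real (c i) / q0 ^ Suc i)" by (rule summable_val[OF q0(1) c])
    have "(\<Sum>i\<in>{0,j}. real (c i) / q0 ^ Suc i) \<le> val q0 c"
      unfolding val_def using q0 by (intro sum_le_suminf[OF s]) auto
    moreover have "1/2 \<le> real (c 0) / q0" using c0 q02 q0
      by (simp add: field_simps)
    moreover have "1/2 \<le> real (c j) / q0 ^ Suc j" using j q0 by simp
    moreover have "(\<Sum>i\<in>{0,j}. real (c i) / q0 ^ Suc i) = real (c 0) / q0 + real (c j) / q0 ^ Suc j"
      using j by (simp del: power_Suc)
    ultimately show ?thesis by linarith
  qed
  moreover have "val (real M + 1) c \<le> 1" using val_bound[of "real M + 1" c M] M c by simp
  moreover have "q0 \<le> real M + 1" using q02 M by simp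
  moreover have "continuous_on {q0..real M + 1} (\<lambda>q. val q c)"
  proof -
    have cont: "continuous_on {q0..real M + 1} (\<lambda>q. (1/q) * (\<Sum>n. real (c n) * (1/q) ^ n))"
      using q0 c by (intro continuous_at_imp_continuous_on ballI val_isCont) auto
    have eq: "\<And>q. q \<in> {q0..real M + 1} \<Longrightarrow> (1/q) * (\<Sum>n. real (c n) * (1/q) ^ n) = val q c"
      using q0 c by (subst val_powser) auto
    show ?thesis by (rule iffD1[OF continuous_on_cong[OF refl eq] cont])
  qed
  ultimately obtain x where "q0 \<le> x" "x \<le> real M + 1" "val x c = 1"
    using IVT2'[of "\<lambda>q. val q c" "real M + 1" 1 q0] by auto
  then show ?thesis using q0 by (intro exI[of _ x]) auto
qed

lemma realize:
  assumes M: "M \<ge> 1" and c: "c \<in> Omega M" and nz: "\<forall>N. \<exists>i\<ge>N. c i \<noteq> 0"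
    and sh: "\<forall>n. lex_le (shift n c) c"
  shows "\<exists>q. 1 < q \<and> q \<le> real M + 1 \<and> alpha M q = c"
proof -
  obtain i where i: "c i \<noteq> 0" using nz by blast
  have "c i \<le> c 0" using lex_le_0[OF sh[rule_format, of i]] by simp
  then have c0: "c 0 \<ge> 1" using i by simp
  obtain j where j: "j \<ge> 1" "c j \<noteq> 0" using nz by blast
  obtain q where q: "1 < q" "q \<le> real M + 1" "val q c = 1" using exists_val_one[OF M c c0 j] by blast
  have "alpha M q = c"
  proof (rule alpha_eqI[OF q(1)])
    show "c \<in> QG_cand M q" using c nz q by (simp add: QG_cand_iff)
    show "\<forall>n. val q (shift n c) \<le> 1" using parry_tail[OF q(1) c q(3) sh] by blast
  qed
  then show ?thesis using q by blast
qed

lemma the_alpha: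
  assumes M: "M \<ge> 1" and c: "c \<in> Omega M" and nz: "\<forall>N. \<exists>i\<ge>N. c i \<noteq> 0"
    and sh: "\<forall>n. lex_le (shift n c) c"
  shows "1 < (THE q. 1 < q \<and> q \<le> real M + 1 \<and> alpha M q = c)
    \<and> (THE q. 1 < q \<and> q \<le> real M + 1 \<and> alpha M q = c) \<le> real M + 1
    \<and> alpha M (THE q. 1 < q \<and> q \<le> real M + 1 \<and> alpha M q = c) = c"
proof (rule theI')
  show "\<exists>!q. 1 < q \<and> q \<le> real M + 1 \<and> alpha M q = c"
    using realize[OF assms] alpha_inj by metis
qed

definition Lb :: "nat \<Rightarrow> nat" where "Lb M = (if even M then 1 else 2)"

definition blk :: "nat \<Rightarrow> nat \<Rightarrow> nat \<Rightarrow> nat list" where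
  "blk M b y = (if even M then [M div 2 + y - b] else [M div 2 + 1 - b, M div 2 + y])"

definition pv :: "nat \<Rightarrow> (nat \<Rightarrow> nat) \<Rightarrow> nat \<Rightarrow> nat" where
  "pv b x n = (if n = 0 then b else x (n - 1))"

definition psib :: "nat \<Rightarrow> nat \<Rightarrow> (nat \<Rightarrow> nat) \<Rightarrow> nat \<Rightarrow> nat" where
  "psib M b x i = blk M (pv b x (i div Lb M)) (x (i div Lb M)) ! (i mod Lb M)"

definition bin :: "(nat \<Rightarrow> nat) \<Rightarrow> bool" where "bin x \<longleftrightarrow> (\<forall>i. x i \<le> 1)"

lemma Lb_pos: "0 < Lb M" by (simp add: Lb_def)

lemma pv_0[simp]: "pv b x 0 = b" and pv_Suc[simp]: "pv b x (Suc n) = x n"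
  by (simp_all add: pv_def)

lemma pv_le1: "b \<le> 1 \<Longrightarrow> bin x \<Longrightarrow> pv b x n \<le> 1"
  by (simp add: pv_def bin_def)

lemma bin_shift: "bin x \<Longrightarrow> bin (shift n x)" by (simp add: bin_def)
lemma bin_conj: "bin (seq_conj 1 x)" by (simp add: bin_def)
lemma bin_Omega: "bin x \<longleftrightarrow> x \<in> Omega 1" by (simp add: bin_def Omega_def)
lemma bin_const: "c \<le> 1 \<Longrightarrow> bin (\<lambda>_. c)" by (simp add: bin_def)

lemma psib_block:
  assumes "r < Lb M"
  shows "psib M b x (Lb M * n + r) = blk M (pv b x n) (x n) ! r"
proof -
  have "(Lb M * n + r) div Lb M = n" "(Lb M * n + r) mod Lb M = r" using assms Lb_pos[of M] by auto
  then show ?thesis by (simp add: psib_def)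
qed

lemma psib_decomp: "Lb M * (i div Lb M) + i mod Lb M = i" by simp

lemma blk_conj:
  assumes "r < Lb M" "b \<le> 1" "y \<le> 1" "M \<ge> 1"
  shows "M - blk M b y ! r = blk M (1 - b) (1 - y) ! r"
proof (cases "even M")
  case True
  then obtain k where k: "M = 2 * k" by auto
  then show ?thesis using assms True by (auto simp: blk_def Lb_def)
next
  case False
  then obtain k where k: "M = 2 * k + 1" using oddE by blast
  then have "r = 0 \<or> r = 1" using assms False by (auto simp: Lb_def)
  then show ?thesis using assms k by (auto simp: blk_def Lb_def)
qed

lemma blk_same:
  assumes "r < Lb M - 1"
  shows "blk M b y ! r = blk M b y' ! r"
  using assms by (auto simp: blk_def Lb_def split: if_splits)

lemma blk_last_less:
  assumes "b \<le> 1" "M \<ge> 1"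
  shows "blk M b 0 ! (Lb M - 1) < blk M b 1 ! (Lb M - 1)"
proof (cases "even M")
  case True
  then obtain k where k: "M = 2 * k" by auto
  then show ?thesis using assms True by (auto simp: blk_def Lb_def)
next
  case False
  then show ?thesis using assms by (auto simp: blk_def Lb_def)
qed

lemma blk_le_M:
  assumes "b \<le> 1" "y \<le> 1" "M \<ge> 1" "r < Lb M"
  shows "blk M b y ! r \<le> M"
proof (cases "even M")
  case True
  then obtain k where k: "M = 2 * k" by auto
  then show ?thesis using assms True by (auto simp: blk_def Lb_def)
next
  case False
  then obtain k where k: "M = 2 * k + 1" using oddE by blast
  then have "r = 0 \<or> r = 1" using assms False by (auto simp: Lb_def)
  then show ?thesis using assms k by (auto simp: blk_def Lb_def)
qed

lemma blk_0: "blk M b y ! 0 = (if even M then M div 2 + y - b else M div 2 + 1 - b)"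
  by (simp add: blk_def)

lemma blk_last: "blk M b y ! (Lb M - 1) = (if even M then M div 2 + y - b else M div 2 + y)"
  by (simp add: blk_def Lb_def)

lemma psib_prefix:
  assumes "\<forall>i<n. x i = y i" "i < Lb M * n"
  shows "psib M b x i = psib M b y i"
proof -
  have "i div Lb M < n" using assms(2) Lb_pos[of M]
    by (simp add: div_less_iff_less_mult mult.commute)
  then show ?thesis using assms(1) by (simp add: psib_def pv_def)
qed

lemma psib_shift:
  "shift (Lb M * n) (psib M b x) = psib M (pv b x n) (shift n x)"
proof
  fix i
  have d: "(Lb M * n + i) div Lb M = n + i div Lb M" "(Lb M * n + i) mod Lb M = i mod Lb M"
    using Lb_pos[of M] by auto
  have "pv b x (n + i div Lb M) = pv (pv b x n) (shift n x) (i div Lb M)"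
    by (cases "i div Lb M") (auto simp: pv_def)
  then show "shift (Lb M * n) (psib M b x) i = psib M (pv b x n) (shift n x) i"
    by (simp add: psib_def d)
qed

lemma psib_conj:
  assumes "b \<le> 1" "bin x" "M \<ge> 1"
  shows "seq_conj M (psib M b x) = psib M (1 - b) (seq_conj 1 x)"
proof
  fix i
  have p: "pv (1 - b) (seq_conj 1 x) n = 1 - pv b x n" for n by (simp add: pv_def)
  show "seq_conj M (psib M b x) i = psib M (1 - b) (seq_conj 1 x) i"
    unfolding seq_conj_apply psib_def p
    using blk_conj[of "i mod Lb M" M "pv b x (i div Lb M)" "x (i div Lb M)"] assms Lb_pos[of M]
      pv_le1[OF assms(1,2)]
    by (simp add: bin_def)
qed

lemma psib_Omega:
  assumes "b \<le> 1" "bin x" "M \<ge> 1"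
  shows "psib M b x \<in> Omega M"
  unfolding Omega_def mem_Collect_eq
proof
  fix i
  have "x (i div Lb M) \<le> 1" using assms by (simp add: bin_def)
  then show "psib M b x i \<le> M" unfolding psib_def
    using blk_le_M[OF pv_le1[OF assms(1,2)] _ assms(3)] Lb_pos[of M] by simp
qed

lemma psib_nonzero:
  assumes "b \<le> 1" "bin x" "M \<ge> 1"
  shows "\<forall>N. \<exists>i\<ge>N. psib M b x i \<noteq> 0"
proof
  fix N
  have xb: "x N \<le> 1" using assms by (simp add: bin_def)
  show "\<exists>i\<ge>N. psib M b x i \<noteq> 0"
  proof (cases "x N = 1")
    case True
    have "psib M b x (Lb M * N + (Lb M - 1)) = blk M (pv b x N) 1 ! (Lb M - 1)"
      using psib_block[of "Lb M - 1" M b x N] Lb_pos[of M] True by simp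
    moreover have "blk M (pv b x N) 1 ! (Lb M - 1) \<noteq> 0"
      using assms pv_le1[OF assms(1,2), of N] by (cases "even M") (auto simp: blk_def Lb_def elim!: evenE)
    moreover have "Lb M * N + (Lb M - 1) \<ge> N" by (simp add: Lb_def)
    ultimately show ?thesis by metis
  next
    case False
    then have x0: "x N = 0" using xb by simp
    have "psib M b x (Lb M * Suc N + 0) = blk M 0 (x (Suc N)) ! 0"
      using psib_block[of 0 M b x "Suc N"] Lb_pos[of M] x0 by simp
    moreover have "blk M 0 (x (Suc N)) ! 0 \<noteq> 0"
      using assms by (auto simp: blk_0 elim!: evenE)
    moreover have "Lb M * Suc N + 0 \<ge> N" by (simp add: Lb_def)
    ultimately show ?thesis by metis
  qed
qed

lemma psib_less:
  assumes "bin x" "bin y" "b \<le> 1" "M \<ge> 1" "lex_less x y"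
  shows "lex_less (psib M b x) (psib M b y)"
proof -
  obtain n where n: "\<forall>i<n. x i = y i" "x n < y n" using assms(5) by (auto simp: lex_less_def)
  have "x n \<le> 1" "y n \<le> 1" using assms(1,2) by (auto simp: bin_def)
  then have xn: "x n = 0" "y n = 1" using n(2) by auto
  have pvq: "pv b x n = pv b y n" using n(1) by (simp add: pv_def)
  show ?thesis
  proof (rule lex_lessI[of "Lb M * n + (Lb M - 1)"])
    fix i assume i: "i < Lb M * n + (Lb M - 1)"
    show "psib M b x i = psib M b y i"
    proof (cases "i < Lb M * n")
      case True then show ?thesis using psib_prefix[OF n(1)] by blast
    next
      case False
      then obtain r where r: "i = Lb M * n + r" "r < Lb M - 1"
        using i by (metis add_less_cancel_left le_Suc_ex not_less)
      have rL: "r < Lb M" using r by simp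
      show ?thesis unfolding r(1) psib_block[OF rL] pvq using blk_same[OF r(2)] by blast
    qed
  next
    have rL: "Lb M - 1 < Lb M" using Lb_pos[of M] by simp
    show "psib M b x (Lb M * n + (Lb M - 1)) < psib M b y (Lb M * n + (Lb M - 1))"
      unfolding psib_block[OF rL] pvq xn using blk_last_less assms pv_le1[OF assms(3,2)] by auto
  qed
qed

lemma psib_less_iff:
  assumes "bin x" "bin y" "b \<le> 1" "M \<ge> 1"
  shows "lex_less (psib M b x) (psib M b y) \<longleftrightarrow> lex_less x y"
proof
  assume l: "lex_less (psib M b x) (psib M b y)"
  show "lex_less x y"
  proof (rule ccontr)
    assume "\<not> lex_less x y"
    then consider "x = y" | "lex_less y x" using lex_total by blast
    then show False
    proof cases
      case 1 then show False using l lex_less_irrefl by simp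
    next
      case 2 then show False using psib_less[OF assms(2,1,3,4) 2] l lex_less_asym by blast
    qed
  qed
qed (rule psib_less[OF assms])

lemma psib_le_iff:
  assumes "bin x" "bin y" "b \<le> 1" "M \<ge> 1"
  shows "lex_le (psib M b x) (psib M b y) \<longleftrightarrow> lex_le x y"
  using psib_less_iff[OF assms(2,1,3,4)] by (simp add: lex_le_iff)

lemma psib_0: "psib M b x 0 = blk M b (x 0) ! 0"
  by (simp add: psib_def)

lemma psib_1_less_0:
  assumes "x 0 = 1" "y 0 \<le> 1" "M \<ge> 1"
  shows "lex_less (psib M 1 y) (psib M 0 x)"
  using assms by (intro lex_less_first) (auto simp: psib_0 blk_0)

lemma psib_conj_less_0:
  assumes "x 0 = 1" "M \<ge> 1"
  shows "lex_less (psib M 1 (seq_conj 1 x)) (psib M 0 y)"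
  using assms by (intro lex_less_first) (auto simp: psib_0 blk_0 elim!: evenE)

lemma psib_odd_shift:
  assumes "odd M" "bin x" "x 0 = 1"
  shows "lex_less (shift (2 * n + 1) (psib M 0 x)) (psib M 0 x)"
    "lex_less (seq_conj M (psib M 0 x)) (shift (2 * n + 1) (psib M 0 x))"
proof -
  have L: "Lb M = 2" using assms by (simp add: Lb_def)
  have d0: "psib M 0 x 0 = M div 2 + 1" "psib M 0 x 1 = M div 2 + 1"
    using assms by (auto simp: psib_def L blk_def)
  have s0: "psib M 0 x (2 * n + 1) = M div 2 + x n"
    using psib_block[of 1 M 0 x n] assms by (simp add: L blk_def)
  have s1: "psib M 0 x (2 * n + 1 + 1) = M div 2 + 1 - x n"
    using psib_block[of 0 M 0 x "Suc n"] assms by (simp add: L blk_def)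
  have xn: "x n \<le> 1" using assms by (simp add: bin_def)
  have Mk: "M - (M div 2 + 1) = M div 2" using assms by (auto elim!: oddE)
  show "lex_less (shift (2 * n + 1) (psib M 0 x)) (psib M 0 x)"
  proof (cases "x n = 0")
    case True then show ?thesis using d0 s0 by (intro lex_less_first) simp
  next
    case False then have "x n = 1" using xn by simp
    then show ?thesis using d0 s0 s1 by (intro lex_lessI[of 1]) auto
  qed
  show "lex_less (seq_conj M (psib M 0 x)) (shift (2 * n + 1) (psib M 0 x))"
  proof (cases "x n = 1")
    case True then show ?thesis using d0 s0 Mk by (intro lex_less_first) simp
  next
    case False then have "x n = 0" using xn by simp
    then show ?thesis using d0 s0 s1 Mk by (intro lex_lessI[of 1]) (auto simp: less_Suc_eq)
  qed
qed

lemma bin_01: "bin x \<Longrightarrow> x i \<noteq> 1 \<Longrightarrow> x i = 0"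
proof -
  assume "bin x" "x i \<noteq> 1"
  moreover have "x i \<le> 1" using \<open>bin x\<close> by (simp add: bin_def)
  ultimately show ?thesis by linarith
qed

lemma lex_shift_ones:
  assumes "bin x" "\<forall>i<n. x i = 1"
  shows "lex_le (shift n x) x"
proof (cases "\<forall>i. x i = 1")
  case True
  then have "shift n x = x" by (auto simp: fun_eq_iff)
  then show ?thesis by simp
next
  case False
  then obtain j where "x j \<noteq> 1" by auto
  define p where "p = (LEAST i. x i \<noteq> 1)"
  have p: "x p \<noteq> 1" unfolding p_def by (rule LeastI) fact
  have bef: "\<forall>i<p. x i = 1" unfolding p_def using not_less_Least by blast
  have xp: "x p = 0" using p assms(1) bin_01 by blast
  have pn: "n \<le> p" using assms(2) p by (meson not_less)
  show ?thesis
  proof (cases "n = 0")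
    case True then show ?thesis by simp
  next
    case False
    have "lex_less (shift n x) x"
    proof (rule lex_lessI[of "p - n"])
      fix i assume "i < p - n"
      then show "shift n x i = x i" using bef by simp
    next
      show "shift n x (p - n) < x (p - n)" using xp pn bef False by simp
    qed
    then show ?thesis by (rule lex_less_imp_le)
  qed
qed

lemma lex_le_prefix_ones:
  assumes "bin x" "lex_le z x" "\<forall>i<d. z i = 1"
  shows "\<forall>i<d. x i = 1"
proof (rule ccontr)
  assume "\<not> ?thesis"
  then obtain j where j: "j < d" "x j \<noteq> 1" by auto
  define p where "p = (LEAST i. x i \<noteq> 1)"
  have p: "x p \<noteq> 1" unfolding p_def by (rule LeastI) (rule j(2))
  have pj: "p \<le> j" unfolding p_def by (rule Least_le) (rule j(2))
  have bef: "\<forall>i<p. x i = 1" unfolding p_def using not_less_Least by blast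
  have xp: "x p = 0" using p assms(1) bin_01 by blast
  have "lex_less x z"
    by (rule lex_lessI[of p]) (use bef assms(3) pj j xp in auto)
  then show False using assms(2) by (simp add: lex_le_iff)
qed

lemma lex_le_prefix_zeros:
  assumes "lex_le a z" "\<forall>i<d. z i = 0"
  shows "\<forall>i<d. a i = 0"
proof (rule ccontr)
  assume "\<not> ?thesis"
  then obtain j where j: "j < d" "a j \<noteq> 0" by auto
  define p where "p = (LEAST i. a i \<noteq> 0)"
  have p: "a p \<noteq> 0" unfolding p_def by (rule LeastI) (rule j(2))
  have pj: "p \<le> j" unfolding p_def by (rule Least_le) (rule j(2))
  have bef: "\<forall>i<p. a i = 0" unfolding p_def using not_less_Least by blast
  have "lex_less z a"
    by (rule lex_lessI[of p]) (use bef assms(2) pj j p in auto)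
  then show False using assms(1) by (simp add: lex_le_iff)
qed

lemma lex_le_shift_common:
  assumes "lex_le a b" "\<forall>i<d. a i = b i"
  shows "lex_le (shift d a) (shift d b)"
proof (cases "a = b")
  case True then show ?thesis by simp
next
  case False
  then have "lex_less a b" using assms(1) by (simp add: lex_le_def)
  then obtain p where p: "\<forall>i<p. a i = b i" "a p < b p" by (auto simp: lex_less_def)
  have "d \<le> p" using p(2) assms(2) by (metis less_irrefl not_less)
  have "lex_less (shift d a) (shift d b)"
    by (rule lex_lessI[of "p - d"]) (use p \<open>d \<le> p\<close> in auto)
  then show ?thesis by (rule lex_less_imp_le)
qed


lemma run_start:
  fixes x :: "nat \<Rightarrow> nat" and n :: nat
  assumes "x n = v"
  shows "\<exists>j\<le>n. (\<forall>i. j \<le> i \<and> i \<le> n \<longrightarrow> x i = v) \<and> (0 < j \<longrightarrow> x (j - 1) \<noteq> v)"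
  using assms
proof (induction n)
  case 0 then show ?case by (intro exI[of _ 0]) auto
next
  case (Suc n)
  show ?case
  proof (cases "x n = v")
    case True
    then obtain j where j: "j \<le> n" "\<forall>i. j \<le> i \<and> i \<le> n \<longrightarrow> x i = v" "0 < j \<longrightarrow> x (j - 1) \<noteq> v"
      using Suc.IH by blast
    have "\<forall>i. j \<le> i \<and> i \<le> Suc n \<longrightarrow> x i = v" using j(2) Suc.prems le_Suc_eq by auto
    then show ?thesis using j by (intro exI[of _ j]) auto
  next
    case False
    then show ?thesis using Suc.prems by (intro exI[of _ "Suc n"]) auto
  qed
qed

lemma C_Vseq1:
  assumes b: "bin x" and x0: "x 0 = 1"
    and C0: "\<forall>n. x n = 0 \<longrightarrow> lex_le (shift (Suc n) x) x"
    and C1: "\<forall>n. x n = 1 \<longrightarrow> lex_le (seq_conj 1 x) (shift (Suc n) x)"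
  shows "x \<in> Vseq 1"
proof -
  have U: "lex_le (shift n x) x" for n
  proof (induction n rule: less_induct)
    case (less n)
    show ?case
    proof (cases n)
      case 0 then show ?thesis by simp
    next
      case (Suc n')
      show ?thesis
      proof (cases "x n' = 0")
        case True then show ?thesis unfolding Suc using C0 by blast
      next
        case False
        moreover have "x n' \<le> 1" using b by (simp add: bin_def)
        ultimately have x1: "x n' = 1" by linarith
        obtain j where Pj: "j \<le> n'" "\<forall>i. j \<le> i \<and> i \<le> n' \<longrightarrow> x i = 1" "0 < j \<longrightarrow> x (j - 1) \<noteq> 1"
          using run_start[of x n' 1] x1 by blast
        define d where "d = n - j"
        have ones: "\<forall>i<d. shift j x i = 1"
        proof (intro allI impI)
          fix i assume "i < d"
          then have "j \<le> j + i \<and> j + i \<le> n'" using Suc Pj(1) by (simp add: d_def)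
          then show "shift j x i = 1" using Pj(2) by simp
        qed
        show ?thesis
        proof (cases "j = 0")
          case True
          then have "\<forall>i<n. x i = 1" using ones by (simp add: d_def)
          then show ?thesis using lex_shift_ones[OF b] by blast
        next
          case False
          have "x (j - 1) \<noteq> 1" using Pj False by simp
          then have xj: "x (j - 1) = 0" using b bin_01 by blast
          have sj0: "Suc (j - 1) = j" using False by simp
          have sj: "lex_le (shift j x) x" using C0[rule_format, of "j - 1"] xj unfolding sj0 by blast
          have "\<forall>i<d. x i = 1" using lex_le_prefix_ones[OF b sj ones] .
          then have com: "\<forall>i<d. shift j x i = x i" using ones by simp
          have A: "lex_le (shift d (shift j x)) (shift d x)" by (rule lex_le_shift_common[OF sj com])
          have B: "shift d (shift j x) = shift n x" using Pj(1) Suc by (simp add: d_def)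
          have "d < n" using False Pj(1) Suc by (simp add: d_def)
          then have C: "lex_le (shift d x) x" by (rule less.IH)
          show ?thesis using lex_le_trans[OF A C] unfolding B .
        qed
      qed
    qed
  qed
  have Lo: "lex_le (seq_conj 1 x) (shift n x)" for n
  proof (cases n)
    case 0
    have "lex_less (seq_conj 1 x) x" using x0 by (intro lex_less_first) simp
    then show ?thesis using 0 by (simp add: lex_less_imp_le)
  next
    case (Suc n')
    show ?thesis
    proof (cases "x n' = 1")
      case True then show ?thesis unfolding Suc using C1 by blast
    next
      case False
      then have x1: "x n' = 0" using b bin_01 by blast
      obtain j where Pj: "j \<le> n'" "\<forall>i. j \<le> i \<and> i \<le> n' \<longrightarrow> x i = 0" "0 < j \<longrightarrow> x (j - 1) \<noteq> 0"
        using run_start[of x n' 0] x1 by blast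
      have j0: "j \<noteq> 0"
      proof
        assume "j = 0"
        then have "x 0 = 0" using Pj(2) by simp
        then show False using x0 by simp
      qed
      define d where "d = n - j"
      have zeros: "\<forall>i<d. shift j x i = 0"
      proof (intro allI impI)
        fix i assume "i < d"
        then have "j \<le> j + i \<and> j + i \<le> n'" using Suc Pj(1) by (simp add: d_def)
        then show "shift j x i = 0" using Pj(2) by simp
      qed
      have "x (j - 1) \<noteq> 0" using Pj j0 by simp
      moreover have "x (j - 1) \<le> 1" using b by (simp add: bin_def)
      ultimately have xj: "x (j - 1) = 1" by linarith
      have sj0: "Suc (j - 1) = j" using j0 by simp
      have sj: "lex_le (seq_conj 1 x) (shift j x)" using C1[rule_format, of "j - 1"] xj unfolding sj0 by blast
      have cz: "\<forall>i<d. seq_conj 1 x i = 0" using lex_le_prefix_zeros[OF sj zeros] .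
      then have com: "\<forall>i<d. seq_conj 1 x i = shift j x i" using zeros by simp
      have A: "lex_le (shift d (seq_conj 1 x)) (shift d (shift j x))" by (rule lex_le_shift_common[OF sj com])
      have B: "shift d (shift j x) = shift n x" using Pj(1) Suc by (simp add: d_def)
      have C: "shift d (seq_conj 1 x) = seq_conj 1 (shift d x)" by (simp add: fun_eq_iff)
      have xO: "x \<in> Omega 1" using b by (simp add: bin_Omega)
      have D: "lex_le (seq_conj 1 x) (seq_conj 1 (shift d x))"
        by (rule lex_le_conj_rev[OF U[of d] Omega_shift[OF xO] xO])
      show ?thesis using lex_le_trans[OF D A[unfolded C]] unfolding B .
    qed
  qed
  show ?thesis using U Lo by (simp add: Vseq_def)
qed

lemma Vseq_D:
  assumes "c \<in> Vseq M"
  shows "lex_le (seq_conj M c) (shift n c)" "lex_le (shift n c) c"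
  using assms by (auto simp: Vseq_def)

lemma psib_Vseq_iff:
  assumes M: "M \<ge> 1" and b: "bin x" and x0: "x 0 = 1"
  shows "psib M 0 x \<in> Vseq M \<longleftrightarrow> x \<in> Vseq 1"
proof
  let ?c = "psib M 0 x"
  assume V: "?c \<in> Vseq M"
  show "x \<in> Vseq 1"
  proof (rule C_Vseq1[OF b x0])
    show "\<forall>n. x n = 0 \<longrightarrow> lex_le (shift (Suc n) x) x"
    proof (intro allI impI)
      fix n assume xn: "x n = 0"
      have "lex_le (shift (Lb M * Suc n) ?c) ?c" using Vseq_D(2)[OF V] .
      then have "lex_le (psib M 0 (shift (Suc n) x)) (psib M 0 x)" using psib_shift[of M "Suc n" 0 x] xn by simp
      then show "lex_le (shift (Suc n) x) x" using psib_le_iff[OF bin_shift[OF b] b _ M] by simp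
    qed
    show "\<forall>n. x n = 1 \<longrightarrow> lex_le (seq_conj 1 x) (shift (Suc n) x)"
    proof (intro allI impI)
      fix n assume xn: "x n = 1"
      have "lex_le (seq_conj M ?c) (shift (Lb M * Suc n) ?c)" using Vseq_D(1)[OF V] .
      then have "lex_le (psib M 1 (seq_conj 1 x)) (psib M 1 (shift (Suc n) x))"
        using psib_shift[of M "Suc n" 0 x] xn psib_conj[OF _ b M] by simp
      then show "lex_le (seq_conj 1 x) (shift (Suc n) x)"
        using psib_le_iff[OF bin_conj bin_shift[OF b] _ M] by simp
    qed
  qed
next
  let ?c = "psib M 0 x"
  assume V: "x \<in> Vseq 1"
  have conjc: "seq_conj M ?c = psib M 1 (seq_conj 1 x)" using psib_conj[OF _ b M] by simp
  have "lex_le (seq_conj M ?c) (shift m ?c) \<and> lex_le (shift m ?c) ?c" for m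
  proof -
    define n where "n = m div Lb M"
    define r where "r = m mod Lb M"
    have m: "m = Lb M * n + r" by (simp add: n_def r_def)
    have rL: "r < Lb M" using Lb_pos[of M] by (simp add: r_def)
    show ?thesis
    proof (cases "r = 0")
      case True
      then have sm: "shift m ?c = psib M (pv 0 x n) (shift n x)" using m by (simp add: psib_shift)
      show ?thesis
      proof (cases "n = 0")
        case True
        then have "shift m ?c = ?c" using \<open>r = 0\<close> m by simp
        moreover have "lex_less (seq_conj M ?c) ?c" unfolding conjc by (rule psib_conj_less_0[of x M, OF x0 M])
        ultimately show ?thesis by (simp add: lex_less_imp_le)
      next
        case False
        then obtain n' where n': "n = Suc n'" by (cases n) auto
        have "x n' \<le> 1" using b by (simp add: bin_def)
        then consider "x n' = 0" | "x n' = 1" by linarith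
        then show ?thesis
        proof cases
          case 1
          have "lex_le (shift n x) x" using Vseq_D(2)[OF V] .
          then have up: "lex_le (shift m ?c) ?c"
            unfolding sm n' using psib_le_iff[OF bin_shift[OF b] b _ M] 1 by simp
          have "lex_less (seq_conj M ?c) (shift m ?c)" unfolding conjc sm n' pv_Suc 1
            by (rule psib_conj_less_0[of x M, OF x0 M])
          then show ?thesis using up by (simp add: lex_less_imp_le)
        next
          case 2
          have "lex_less (shift m ?c) ?c" unfolding sm n' pv_Suc 2
            using psib_1_less_0[of x "shift (Suc n') x" M, OF x0 _ M] b by (simp add: bin_def)
          moreover have "lex_le (seq_conj 1 x) (shift n x)" using Vseq_D(1)[OF V] .
          then have "lex_le (seq_conj M ?c) (shift m ?c)"
            unfolding conjc sm n' pv_Suc 2 using psib_le_iff[OF bin_conj bin_shift[OF b] _ M] by simp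
          ultimately show ?thesis by (simp add: lex_less_imp_le)
        qed
      qed
    next
      case False
      then have odd: "odd M" "r = 1" using rL by (auto simp: Lb_def split: if_splits)
      then have "m = 2 * n + 1" using m by (simp add: Lb_def)
      then show ?thesis using psib_odd_shift[OF odd(1) b x0, of n] by (simp add: lex_less_imp_le)
    qed
  qed
  then show "?c \<in> Vseq M" by (simp add: Vseq_def)
qed

fun dec :: "nat \<Rightarrow> (nat \<Rightarrow> nat) \<Rightarrow> nat \<Rightarrow> nat" where
  "dec M c 0 = (if c (Lb M * 0 + (Lb M - 1)) = blk M 0 1 ! (Lb M - 1) then 1 else 0)"
| "dec M c (Suc n) = (if c (Lb M * Suc n + (Lb M - 1)) = blk M (dec M c n) 1 ! (Lb M - 1) then 1 else 0)"

lemma dec_eq: "dec M c n = (if c (Lb M * n + (Lb M - 1)) = blk M (pv 0 (dec M c) n) 1 ! (Lb M - 1) then 1 else 0)"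
  by (cases n) (simp_all del: dec.simps, simp_all)

lemma bin_dec: "bin (dec M c)"
  unfolding bin_def
proof
  fix i show "dec M c i \<le> 1" by (cases i) auto
qed

lemma block_digits_even:
  assumes "M = 2 * k" "k \<ge> 1" "b \<le> 1" "k - 1 \<le> d" "d \<le> k + 1"
    "b = 1 \<Longrightarrow> d \<noteq> k + 1" "b = 0 \<Longrightarrow> d \<noteq> k - 1"
  shows "d = blk M b (if d = blk M b 1 ! 0 then 1 else 0) ! 0"
proof -
  have "b = 0 \<or> b = 1" using assms by linarith
  then show ?thesis using assms by (auto simp: blk_def)
qed

lemma block_digits_odd:
  assumes "M = 2 * k + 1" "b \<le> 1" "k \<le> d0" "d0 \<le> k + 1" "k \<le> d1" "d1 \<le> k + 1"
    "b = 1 \<Longrightarrow> d0 \<noteq> k + 1" "b = 0 \<Longrightarrow> d0 \<noteq> k"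
  shows "d0 = blk M b (if d1 = blk M b 1 ! 1 then 1 else 0) ! 0"
    "d1 = blk M b (if d1 = blk M b 1 ! 1 then 1 else 0) ! 1"
proof -
  have "b = 0 \<or> b = 1" using assms by linarith
  then show "d0 = blk M b (if d1 = blk M b 1 ! 1 then 1 else 0) ! 0"
    "d1 = blk M b (if d1 = blk M b 1 ! 1 then 1 else 0) ! 1" using assms by (auto simp: blk_def)
qed

lemma psib_const_at: "r < Lb M \<Longrightarrow> 0 < m \<Longrightarrow> psib M b (\<lambda>_. y) (Lb M * m + r) = blk M y y ! r"
  by (simp add: psib_block pv_def)

lemma range_psib:
  assumes M: "M \<ge> 1" and cO: "c \<in> Omega M" and cV: "c \<in> Vseq M"
    and lo: "lex_less (psib M 0 (\<lambda>_. 0)) c" and hi: "lex_le c (psib M 0 (\<lambda>_. 1))"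
  shows "\<exists>x. bin x \<and> x 0 = 1 \<and> c = psib M 0 x"
proof -
  define L where "L = Lb M"
  define k where "k = M div 2"
  define x where "x = dec M c"
  have L0: "0 < L" using Lb_pos by (simp add: L_def)
  have bx: "bin x" unfolding x_def by (rule bin_dec)
  have up: "c n \<le> c 0" for n using lex_le_0[OF Vseq_D(2)[OF cV, of n]] by simp
  have dn: "M - c 0 \<le> c n" for n using lex_le_0[OF Vseq_D(1)[OF cV, of n]] by simp
  have p1_0: "psib M 0 (\<lambda>_. 1) 0 = k + 1" by (simp add: psib_0 blk_0 k_def)
  have p0_0: "psib M 0 (\<lambda>_. 0) 0 = (if even M then k else k + 1)" by (simp add: psib_0 blk_0 k_def)
  have c0: "c 0 = k + 1"
  proof -
    have a: "c 0 \<le> k + 1" using lex_le_0[OF hi] p1_0 by simp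
    have b: "psib M 0 (\<lambda>_. 0) 0 \<le> c 0" using lex_less_0[OF lo] .
    show ?thesis
    proof (cases "even M")
      case False then show ?thesis using a b p0_0 by simp
    next
      case True
      have "c 0 \<noteq> k"
      proof
        assume ck: "c 0 = k"
        have "M - k = k" using True by (auto simp: k_def)
        then have "c = (\<lambda>_. k)" using up dn ck by (auto simp: fun_eq_iff intro: le_antisym)
        moreover have "psib M 0 (\<lambda>_. 0) = (\<lambda>_. k)" using True by (auto simp: psib_def blk_def k_def fun_eq_iff pv_def Lb_def)
        ultimately show False using lo lex_less_irrefl by simp
      qed
      then show ?thesis using a b p0_0 True by simp
    qed
  qed
  have dig: "M - k - 1 \<le> c n \<and> c n \<le> k + 1" for n using up[of n] dn[of n] c0 by simp
  have Mk: "M - k - 1 < M - k" "k + 1 \<le> M" using M by (auto simp: k_def)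
  have p1s: "psib M 1 (\<lambda>_. 0) = seq_conj M (psib M 0 (\<lambda>_. 1))"
  proof -
    have "seq_conj 1 (\<lambda>_. 1::nat) = (\<lambda>_. 0)" by (simp add: fun_eq_iff)
    then show ?thesis using psib_conj[of 0 "\<lambda>_. 1" M] M by (simp add: bin_def)
  qed
  have block: "\<forall>r<L. c (L * n + r) = blk M (pv 0 x n) (x n) ! r" for n
  proof (induction n rule: less_induct)
    case (less n)
    have pre: "c i = psib M 0 x i" if i: "i < L * n" for i
    proof -
      have "i div L < n" using i L0 by (simp add: div_less_iff_less_mult mult.commute)
      then have h: "\<forall>r<L. c (L * (i div L) + r) = blk M (pv 0 x (i div L)) (x (i div L)) ! r"
        by (rule less.IH)
      have "i mod L < L" using L0 by simp
      then have "c (L * (i div L) + i mod L) = blk M (pv 0 x (i div L)) (x (i div L)) ! (i mod L)"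
        using h by blast
      then show ?thesis unfolding mult_div_mod_eq by (simp add: psib_def L_def)
    qed
    define b where "b = pv 0 x n"
    have b1: "b \<le> 1" unfolding b_def using pv_le1[OF _ bx] by simp
    have zpre: "shift (L * j) c i = psib M (pv 0 x j) (shift j x) i" if "j \<le> n" "i < L * (n - j)" for j i
    proof -
      have "L * j + L * (n - j) = L * n" using that(1) by (simp add: add_mult_distrib2[symmetric])
      then have "L * j + i < L * n" using that(2) by linarith
      then have e: "c (L * j + i) = psib M 0 x (L * j + i)" by (rule pre)
      have "shift (Lb M * j) (psib M 0 x) i = psib M (pv 0 x j) (shift j x) i" by (simp only: psib_shift)
      then show ?thesis using e by (simp add: L_def)
    qed
    have nb1: "c (L * n) \<noteq> k + 1" if bb: "b = 1"
    proof
      assume d: "c (L * n) = k + 1"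
      obtain n' where n': "n = Suc n'" using bb by (cases n) (auto simp: b_def)
      have xn': "x n' = 1" using bb by (simp add: b_def n')
      obtain j where j: "j \<le> n'" "\<forall>i. j \<le> i \<and> i \<le> n' \<longrightarrow> x i = 1" "0 < j \<longrightarrow> x (j - 1) \<noteq> 1"
        using run_start[of x n' 1] xn' by blast
      have pvj: "pv 0 x j = 0"
      proof (cases j)
        case (Suc j') then show ?thesis using j(3) bin_01[OF bx] by simp
      qed simp
      have ones: "\<forall>i<n - j. shift j x i = 1"
      proof (intro allI impI)
        fix i assume "i < n - j"
        then have "j \<le> j + i \<and> j + i \<le> n'" using n' j(1) by simp
        then show "shift j x i = 1" using j(2) by simp
      qed
      let ?z = "shift (L * j) c"
      have "lex_less (psib M 0 (\<lambda>_. 1)) ?z"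
      proof (rule lex_lessI[of "L * (n - j)"])
        fix i assume i: "i < L * (n - j)"
        have "?z i = psib M 0 (shift j x) i" using zpre[of j i] i j(1) n' pvj by simp
        also have "\<dots> = psib M 0 (\<lambda>_. 1) i"
          using psib_prefix[of "n - j" "shift j x" "\<lambda>_. 1" i M 0] ones i by (simp add: L_def)
        finally show "psib M 0 (\<lambda>_. 1) i = ?z i" by simp
      next
        have "L * j + L * (n - j) = L * n" using j(1) n' by (simp add: add_mult_distrib2[symmetric])
        then have "?z (L * (n - j)) = c (L * n)" by simp
        moreover have "psib M 0 (\<lambda>_. 1) (L * (n - j)) = k"
          using psib_const_at[of 0 M "n - j" 0 1] j(1) n' L0
          by (auto simp: L_def blk_def k_def)
        ultimately show "psib M 0 (\<lambda>_. 1) (L * (n - j)) < ?z (L * (n - j))" using d by simp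
      qed
      moreover have "lex_le ?z c"
      proof (cases "j = 0")
        case True then show ?thesis by simp
      next
        case False then show ?thesis using Vseq_D(2)[OF cV] by blast
      qed
      ultimately have "lex_less (psib M 0 (\<lambda>_. 1)) (psib M 0 (\<lambda>_. 1))"
        using hi by (blast intro: lex_less_le_trans lex_le_trans)
      then show False by (simp add: lex_less_irrefl)
    qed
    have nb0: "c (L * n) \<noteq> M - k - 1" if bb: "b = 0"
    proof
      assume d: "c (L * n) = M - k - 1"
      have n0: "n \<noteq> 0"
      proof
        assume "n = 0"
        then have "c 0 = M - k - 1" using d by simp
        then show False using c0 M by (auto simp: k_def)
      qed
      obtain n' where n': "n = Suc n'" using n0 by (cases n) auto
      have xn': "x n' = 0" using bb by (simp add: b_def n')
      obtain j where j: "j \<le> n'" "\<forall>i. j \<le> i \<and> i \<le> n' \<longrightarrow> x i = 0" "0 < j \<longrightarrow> x (j - 1) \<noteq> 0"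
        using run_start[of x n' 0] xn' by blast
      define b' where "b' = pv 0 x j"
      have b'01: "(j = 0 \<and> b' = 0) \<or> (j > 0 \<and> b' = 1)"
      proof (cases j)
        case 0 then show ?thesis by (simp add: b'_def)
      next
        case (Suc j')
        then have "x j' \<noteq> 0" using j(3) by simp
        moreover have "x j' \<le> 1" using bx by (simp add: bin_def)
        ultimately show ?thesis using Suc by (simp add: b'_def)
      qed
      have zeros: "\<forall>i<n - j. shift j x i = 0"
      proof (intro allI impI)
        fix i assume "i < n - j"
        then have "j \<le> j + i \<and> j + i \<le> n'" using n' j(1) by simp
        then show "shift j x i = 0" using j(2) by simp
      qed
      let ?z = "shift (L * j) c"
      have zl: "lex_less ?z (psib M b' (\<lambda>_. 0))"
      proof (rule lex_lessI[of "L * (n - j)"])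
        fix i assume i: "i < L * (n - j)"
        have "?z i = psib M b' (shift j x) i" using zpre[of j i] i j(1) n' by (simp add: b'_def)
        also have "\<dots> = psib M b' (\<lambda>_. 0) i"
          using psib_prefix[of "n - j" "shift j x" "\<lambda>_. 0" i M b'] zeros i by (simp add: L_def)
        finally show "?z i = psib M b' (\<lambda>_. 0) i" .
      next
        have "L * j + L * (n - j) = L * n" using j(1) n' by (simp add: add_mult_distrib2[symmetric])
        then have "?z (L * (n - j)) = c (L * n)" by simp
        moreover have "psib M b' (\<lambda>_. 0) (L * (n - j)) = M - k"
          using psib_const_at[of 0 M "n - j" b' 0] j(1) n' L0
          by (auto simp: L_def blk_def k_def elim!: oddE)
        ultimately show "?z (L * (n - j)) < psib M b' (\<lambda>_. 0) (L * (n - j))" using d Mk by simp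
      qed
      show False
      proof (cases "j = 0")
        case True
        then have "lex_less c (psib M 0 (\<lambda>_. 0))" using zl b'01 by simp
        then show False using lo lex_less_asym by blast
      next
        case False
        then have b'1: "b' = 1" using b'01 by simp
        have pO: "psib M 0 (\<lambda>_. 1) \<in> Omega M" using psib_Omega[of 0 "\<lambda>_. 1" M] M by (simp add: bin_def)
        have "lex_le (psib M 1 (\<lambda>_. 0)) (seq_conj M c)"
          unfolding p1s by (rule lex_le_conj_rev[OF hi cO pO])
        moreover have "lex_le (seq_conj M c) ?z" using Vseq_D(1)[OF cV] by blast
        ultimately have "lex_le (psib M 1 (\<lambda>_. 0)) ?z" by (rule lex_le_trans)
        then have "lex_less (psib M 1 (\<lambda>_. 0)) (psib M 1 (\<lambda>_. 0))"
          using zl b'1 by (blast intro: lex_le_less_trans)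
        then show False by (simp add: lex_less_irrefl)
      qed
    qed
    show ?case
    proof (intro allI impI)
      fix r assume r: "r < L"
      have xn: "x n = (if c (L * n + (L - 1)) = blk M b 1 ! (L - 1) then 1 else 0)"
        unfolding x_def b_def L_def by (rule dec_eq)
      show "c (L * n + r) = blk M (pv 0 x n) (x n) ! r"
      proof (cases "even M")
        case True
        then have L1: "L = 1" by (simp add: L_def Lb_def)
        have r0: "r = 0" using r L1 by simp
        have Mk2: "M = 2 * k" "k \<ge> 1" using True M by (auto simp: k_def)
        have "c n = blk M b (if c n = blk M b 1 ! 0 then 1 else 0) ! 0"
          using block_digits_even[OF Mk2 b1, of "c n"] dig[of n] nb0 nb1 Mk2 L1 by simp
        then show ?thesis using xn L1 r0 by (simp add: b_def)
      next
        case False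
        then have L2: "L = 2" by (simp add: L_def Lb_def)
        have Mk2: "M = 2 * k + 1" using False by (auto simp: k_def elim!: oddE)
        have rr: "r = 0 \<or> r = 1" using r L2 by auto
        have "k \<le> c (2 * n)" "c (2 * n) \<le> k + 1" "k \<le> c (2 * n + 1)" "c (2 * n + 1) \<le> k + 1"
          using dig[of "2 * n"] dig[of "2 * n + 1"] Mk2 by auto
        note bd = block_digits_odd[OF Mk2 b1 this]
        have "c (2 * n) = blk M b (if c (2 * n + 1) = blk M b 1 ! 1 then 1 else 0) ! 0"
          "c (2 * n + 1) = blk M b (if c (2 * n + 1) = blk M b 1 ! 1 then 1 else 0) ! 1"
          using bd nb0 nb1 L2 Mk2 by auto
        then show ?thesis using xn L2 rr by (auto simp: b_def)
      qed
    qed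
  qed
  have cx: "c = psib M 0 x"
  proof
    fix i
    have "i mod L < L" using L0 by simp
    then have "c (L * (i div L) + i mod L) = blk M (pv 0 x (i div L)) (x (i div L)) ! (i mod L)"
      using block by blast
    then show "c i = psib M 0 x i" unfolding mult_div_mod_eq by (simp add: psib_def L_def)
  qed
  have x0: "x 0 = 1"
  proof (rule ccontr)
    assume "x 0 \<noteq> 1"
    then have x00: "x 0 = 0" using bin_01[OF bx] by blast
    have "lex_less (\<lambda>_. 0) x" using lo unfolding cx using psib_less_iff[OF bin_const[of 0] bx _ M] by simp
    then obtain i where "x i \<noteq> 0" by (auto simp: lex_less_def)
    define p where "p = (LEAST i. x i \<noteq> 0)"
    have xp: "x p \<noteq> 0" unfolding p_def by (rule LeastI) fact
    have p0: "p \<noteq> 0"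
    proof
      assume "p = 0" then show False using xp x00 by simp
    qed
    have "p - 1 < p" using p0 by simp
    then have "\<not> x (p - 1) \<noteq> 0" unfolding p_def by (rule not_less_Least)
    then have "x (p - 1) = 0" by simp
    then have pvp: "pv 0 x p = 0" using p0 by (simp add: pv_def)
    have "x p \<le> 1" using bx by (simp add: bin_def)
    then have xp1: "x p = 1" using xp by linarith
    have "lex_le (shift (L * p) c) c" using Vseq_D(2)[OF cV] .
    then have "lex_le (psib M 0 (shift p x)) (psib M 0 x)"
      unfolding cx L_def psib_shift pvp .
    then have "lex_le (shift p x) x" using psib_le_iff[OF bin_shift[OF bx] bx _ M] by simp
    moreover have "lex_less x (shift p x)" using x00 xp1 by (intro lex_less_first) simp
    ultimately show False by (simp add: lex_le_iff)
  qed
  show ?thesis using bx x0 cx by blast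
qed

fun ebit :: "edge \<Rightarrow> nat" where
  "ebit E0 = 1" | "ebit E3 = 1" | "ebit E4 = 1" | "ebit E1 = 0" | "ebit E2 = 0"

lemma Lstar_ebit: "Lstar e = [ebit e]" by (cases e) auto

lemma ebit_le1: "ebit e \<le> 1" by (cases e) auto

lemma Lu_E0: "Lu M E0 = blk M 0 1"
  by (auto simp: word_plus_def unit_lift_def blk_def)

lemma Lu_blk:
  assumes "etgt e = esrc e'" "M \<ge> 1"
  shows "Lu M e' = blk M (ebit e) (ebit e')"
proof (cases "even M")
  case True
  then obtain k where k: "M = 2 * k" by auto
  then have k1: "k \<ge> 1" using assms by simp
  show ?thesis using assms k k1
    by (cases e; cases e') (auto simp: word_plus_def word_conj_def unit_lift_def blk_def)
next
  case False
  then obtain k where k: "M = 2 * k + 1" using oddE by blast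
  show ?thesis using assms k
    by (cases e; cases e') (auto simp: word_plus_def word_conj_def unit_lift_def blk_def)
qed

lemma length_Lu: "length (Lu M e) = Lb M"
  by (cases e) (auto simp: word_plus_def word_conj_def unit_lift_def Lb_def)

lemma word_concat_const:
  assumes "\<forall>j. length (w j) = L" "0 < L"
  shows "word_concat w i = w (i div L) ! (i mod L)"
proof -
  have ws: "wstart w k = k * L" for k unfolding wstart_def using assms(1) by simp
  have "(LEAST k. i < wstart w (Suc k)) = i div L"
  proof (rule Least_equality)
    have "i div L * L + i mod L = i" by (rule div_mult_mod_eq)
    moreover have "i mod L < L" using assms(2) by simp
    ultimately show "i < wstart w (Suc (i div L))" unfolding ws mult_Suc by linarith
    fix y assume "i < wstart w (Suc y)"
    then have "i < Suc y * L" by (simp add: ws)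
    then have "i div L < Suc y" by (rule less_mult_imp_div_less)
    then show "i div L \<le> y" by simp
  qed
  moreover have "i - i div L * L = i mod L" by (rule minus_div_mult_eq_mod)
  ultimately show ?thesis unfolding word_concat_def Let_def ws by simp
qed

definition bits :: "(nat \<Rightarrow> edge) \<Rightarrow> nat \<Rightarrow> nat" where
  "bits p n = ebit (p n)"

lemma bin_bits: "bin (bits p)" unfolding bin_def bits_def using ebit_le1 by simp

lemma path_Lu:
  assumes "is_path p" "M \<ge> 1"
  shows "Lu M (p n) = blk M (pv 0 (bits p) n) (bits p n)"
proof (cases n)
  case 0
  have "p 0 = E0" using assms by (simp add: is_path_def)
  then show ?thesis using 0 Lu_E0[of M] by (simp add: bits_def)
next
  case (Suc m)
  have "etgt (p m) = esrc (p (Suc m))" using assms by (simp add: is_path_def)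
  then show ?thesis using Lu_blk[OF _ assms(2)] Suc by (simp add: bits_def)
qed

lemma path_concat:
  assumes "is_path p" "M \<ge> 1"
  shows "word_concat (\<lambda>i. Lu M (p i)) = psib M 0 (bits p)"
proof
  fix i
  have "word_concat (\<lambda>i. Lu M (p i)) i = Lu M (p (i div Lb M)) ! (i mod Lb M)"
    by (rule word_concat_const) (auto simp: length_Lu Lb_pos)
  then show "word_concat (\<lambda>i. Lu M (p i)) i = psib M 0 (bits p) i"
    using path_Lu[OF assms] by (simp add: psib_def)
qed

lemma path_concat_star:
  "word_concat (\<lambda>i. Lstar (p i)) = bits p"
proof
  fix i
  show "word_concat (\<lambda>i. Lstar (p i)) i = bits p i"
    by (subst word_concat_const[where L=1]) (auto simp: Lstar_ebit bits_def)
qed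

lemma bits0: "is_path p \<Longrightarrow> bits p 0 = 1"
  by (simp add: is_path_def bits_def)

definition edge_of :: "nat \<Rightarrow> nat \<Rightarrow> edge" where
  "edge_of b y = (if b = 1 then (if y = 1 then E4 else E1) else (if y = 1 then E3 else E2))"

definition mkpath :: "(nat \<Rightarrow> nat) \<Rightarrow> nat \<Rightarrow> edge" where
  "mkpath x n = (if n = 0 then E0 else edge_of (x (n - 1)) (x n))"

lemma mkpath_bits:
  assumes "bin x" "x 0 = 1"
  shows "bits (mkpath x) = x"
proof
  fix n
  have "x n \<le> 1" using assms by (simp add: bin_def)
  then show "bits (mkpath x) n = x n" using assms
    by (cases n) (auto simp: bits_def mkpath_def edge_of_def)
qed

lemma mkpath_path:
  assumes "bin x" "x 0 = 1"
  shows "is_path (mkpath x)"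
  unfolding is_path_def
proof (intro conjI allI)
  show "mkpath x 0 = E0" by (simp add: mkpath_def)
  fix n
  have t: "etgt (mkpath x n) = (if x n = 1 then VA else VB)"
    using assms by (cases n) (auto simp: mkpath_def edge_of_def)
  have s: "esrc (mkpath x (Suc n)) = (if x n = 1 then VA else VB)"
    by (auto simp: mkpath_def edge_of_def)
  show "etgt (mkpath x n) = esrc (mkpath x (Suc n))" using t s by simp
qed

lemma Phi_u_psib:
  assumes "bin x" "x 0 = 1" "M \<ge> 1"
  shows "Phi_u M (psib M 0 x) = x"
proof -
  define p where "p = (SOME p. is_path p \<and> word_concat (\<lambda>i. Lu M (p i)) = psib M 0 x)"
  have ex: "is_path (mkpath x) \<and> word_concat (\<lambda>i. Lu M (mkpath x i)) = psib M 0 x"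
    using mkpath_path[OF assms(1,2)] path_concat[OF _ assms(3)] mkpath_bits[OF assms(1,2)] by simp
  have p: "is_path p \<and> word_concat (\<lambda>i. Lu M (p i)) = psib M 0 x"
    unfolding p_def by (rule someI[of _ "mkpath x"]) (rule ex)
  then have eq: "psib M 0 (bits p) = psib M 0 x" using path_concat[OF _ assms(3), of p] by simp
  have "bits p = x"
  proof (rule ccontr)
    assume "bits p \<noteq> x"
    then consider "lex_less (bits p) x" | "lex_less x (bits p)" using lex_total by blast
    then show False
      using psib_less[OF bin_bits assms(1) _ assms(3), of 0 p] psib_less[OF assms(1) bin_bits _ assms(3), of 0 p]
        eq lex_less_irrefl by (cases) auto
  qed
  then show ?thesis unfolding Phi_u_def Let_def p_def[symmetric] path_concat_star by simp
qed

declare bitsum.simps[simp del]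

lemma bitsum_0[simp]: "bitsum 0 = 0" by (subst bitsum.simps) simp

lemma bitsum_even: "bitsum (2 * i) = bitsum i"
proof (cases "i = 0")
  case True then show ?thesis by simp
next
  case False then show ?thesis by (subst bitsum.simps) simp
qed

lemma bitsum_odd: "bitsum (2 * i + 1) = Suc (bitsum i)"
  by (subst bitsum.simps) simp

lemma bitsum_pow2: "bitsum (2 ^ n) = 1"
proof (induction n)
  case 0 then show ?case using bitsum_odd[of 0] by simp
next
  case (Suc n) then show ?case using bitsum_even[of "2 ^ n"] by simp
qed

definition tn :: "nat \<Rightarrow> nat" where "tn i = bitsum i mod 2"
definition taun :: "nat \<Rightarrow> nat" where "taun j = tn (Suc j)"

lemma tn_le1: "tn i \<le> 1" by (simp add: tn_def)
lemma tn_even: "tn (2 * i) = tn i" by (simp add: tn_def bitsum_even)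
lemma tn_odd: "tn (2 * i + 1) = 1 - tn i" unfolding tn_def bitsum_odd by presburger
lemma tn_0[simp]: "tn 0 = 0" by (simp add: tn_def)
lemma tn_pow2: "tn (2 ^ n) = 1" by (simp add: tn_def bitsum_pow2)
lemma tau_tn: "tau i = int (tn i)" by (simp add: tau_def tn_def)
lemma bin_taun: "bin taun" unfolding bin_def taun_def using tn_le1 by simp
lemma taun0: "taun 0 = 1" using tn_odd[of 0] by (simp add: taun_def)

lemma pv_taun: "pv 0 taun j = tn j"
  by (cases j) (auto simp: taun_def)

lemma lam_psib:
  assumes M: "M \<ge> 1"
  shows "lam M (Suc j) = psib M 0 taun j"
proof (cases "even M")
  case True
  then have L: "Lb M = 1" by (simp add: Lb_def)
  have k: "M div 2 \<ge> 1" using True M by (auto elim!: evenE)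
  have "psib M 0 taun j = M div 2 + tn (Suc j) - tn j"
    unfolding psib_def L using True by (simp add: blk_def pv_taun taun_def)
  moreover have "lam M (Suc j) = nat (int (M div 2) + int (tn (Suc j)) - int (tn j))"
    using True by (simp add: lam_def tau_tn)
  moreover have "tn j \<le> 1" by (rule tn_le1)
  ultimately show ?thesis using k by simp
next
  case False
  then have L: "Lb M = 2" by (simp add: Lb_def)
  have lam: "lam M (Suc j) = M div 2 + tn (Suc j)"
    using False by (simp add: lam_def tau_tn)
  obtain m r where jm: "j = 2 * m + r" "r < 2" by (metis div_mult_mod_eq mod_less_divisor zero_less_numeral mult.commute)
  then consider "r = 0" | "r = 1" by linarith
  then show ?thesis
  proof cases
    case 1
    have p: "psib M 0 taun j = M div 2 + 1 - tn m"
      using psib_block[of 0 M 0 taun m] jm 1 False L by (simp add: blk_def pv_taun)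
    have "tn (Suc j) = 1 - tn m" using tn_odd[of m] jm 1 by simp
    then show ?thesis using lam p tn_le1[of m] by simp
  next
    case 2
    have p: "psib M 0 taun j = M div 2 + tn (Suc m)"
      using psib_block[of 1 M 0 taun m] jm 2 False L by (simp add: blk_def taun_def)
    have "tn (Suc j) = tn (Suc m)" using tn_even[of "Suc m"] jm 2 by simp
    then show ?thesis using lam p by simp
  qed
qed

lemma lam1: "lam 1 (Suc j) = taun j"
proof -
  have "lam 1 (Suc j) = nat (0 + tau (Suc j))" by (simp add: lam_def)
  then show ?thesis by (simp add: tau_tn taun_def)
qed

definition G :: "nat \<Rightarrow> nat \<Rightarrow> nat \<Rightarrow> nat" where
  "G M N = (let w = map (lam M) [1..<N + 1] in seq_app w (cyc (word_plus (word_conj M w))))"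

lemma qprime_G: "n \<ge> 1 \<Longrightarrow> qprime M n = (THE q. 1 < q \<and> q \<le> real M + 1 \<and> alpha M q = G M (Nlen M n))"
  by (simp add: qprime_def G_def Let_def)

lemma word_plus_length: "w \<noteq> [] \<Longrightarrow> length (word_plus w) = length w"
  by (simp add: word_plus_def)

lemma word_plus_nth:
  assumes "w \<noteq> []" "j < length w"
  shows "word_plus w ! j = (if j = length w - 1 then last w + 1 else w ! j)"
  using assms by (auto simp: word_plus_def nth_append nth_butlast)

lemma G_apply:
  assumes N: "N \<ge> 1"
  shows "G M N i = (if i < N then lam M (Suc i) else
     (if (i - N) mod N = N - 1 then M - lam M (Suc ((i - N) mod N)) + 1 else M - lam M (Suc ((i - N) mod N))))"
proof -
  define w where "w = map (lam M) [1..<N + 1]"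
  have lw: "length w = N" by (simp add: w_def)
  have wn: "j < N \<Longrightarrow> w ! j = lam M (Suc j)" for j unfolding w_def by (subst nth_map_upt) auto
  have wne: "w \<noteq> []" using lw N by auto
  define v where "v = word_plus (word_conj M w)"
  have cne: "word_conj M w \<noteq> []" using wne by (simp add: word_conj_def)
  have lv: "length v = N" unfolding v_def using word_plus_length[OF cne] lw by (simp add: word_conj_def)
  have vn: "j < N \<Longrightarrow> v ! j = (if j = N - 1 then M - lam M (Suc j) + 1 else M - lam M (Suc j))" for j
  proof -
    assume j: "j < N"
    have lc: "length (word_conj M w) = N" using lw by (simp add: word_conj_def)
    have last: "last (word_conj M w) = M - lam M (Suc (N - 1))"
      using cne lc N wn[of "N - 1"] by (simp add: last_conv_nth word_conj_def)
    show ?thesis unfolding v_def using word_plus_nth[OF cne, of j] lc j last wn[OF j]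
      by (auto simp: word_conj_def)
  qed
  have "G M N i = seq_app w (cyc v) i" by (simp add: G_def w_def v_def Let_def)
  also have "\<dots> = (if i < N then w ! i else v ! ((i - N) mod N))"
    by (simp add: seq_app_def cyc_def lw lv)
  finally show ?thesis using wn vn N by simp
qed

lemma blk_plus:
  assumes "b \<le> 1" "M \<ge> 1" "r < Lb M"
  shows "blk M (1 - b) 1 ! r = (if r = Lb M - 1 then M - blk M b 1 ! r + 1 else M - blk M b 1 ! r)"
proof (cases "even M")
  case True
  then obtain k where k: "M = 2 * k" by auto
  then show ?thesis using assms True by (auto simp: blk_def Lb_def)
next
  case False
  then obtain k where k: "M = 2 * k + 1" using oddE by blast
  then have "r = 0 \<or> r = 1" using assms False by (auto simp: Lb_def)
  then show ?thesis using assms k by (auto simp: blk_def Lb_def)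
qed

lemma lam1': "lam (Suc 0) (Suc j) = taun j" using lam1 by simp

lemma lam1_pow: "lam (Suc 0) (2 ^ n) = 1"
proof -
  have "Suc (2 ^ n - 1) = (2::nat) ^ n" by simp
  then have "lam (Suc 0) (2 ^ n) = taun (2 ^ n - 1)" using lam1'[of "2 ^ n - 1"] by simp
  also have "\<dots> = 1" by (simp add: taun_def tn_pow2)
  finally show ?thesis .
qed

lemma taun_last: "taun (2 ^ n - 1) = 1"
proof -
  have "Suc (2 ^ n - 1) = (2::nat) ^ n" by simp
  then show ?thesis by (simp add: taun_def tn_pow2)
qed

lemma G1_lt: "m < 2 ^ n \<Longrightarrow> G 1 (2 ^ n) m = taun m"
  using G_apply[of "2 ^ n" 1 m] by (simp add: lam1 lam1')

lemma G1_ge: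
  assumes "2 ^ n \<le> m"
  shows "G 1 (2 ^ n) m = (if (m - 2 ^ n) mod 2 ^ n = 2 ^ n - 1 then 1 else 1 - taun ((m - 2 ^ n) mod 2 ^ n))"
  using G_apply[of "2 ^ n" 1 m] assms taun_last[of n] by (auto simp: lam1 lam1' lam1_pow)

lemma bin_G1: "bin (G 1 (2 ^ n))"
  unfolding bin_def
proof
  fix m
  show "G 1 (2 ^ n) m \<le> 1"
  proof (cases "m < 2 ^ n")
    case True then show ?thesis using G1_lt bin_taun by (simp add: bin_def)
  next
    case False then show ?thesis using G1_ge[of n m] by simp
  qed
qed

lemma G1_0: "G 1 (2 ^ n) 0 = 1"
  using G1_lt[of 0 n] taun0 by simp

lemma G1_prefix: "\<forall>m<2 ^ n. G 1 (2 ^ n) m = taun m"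
  using G1_lt by blast

lemma G1_pv:
  assumes "2 ^ n \<le> m"
  shows "pv 0 (G 1 (2 ^ n)) m = 1 - tn ((m - 2 ^ n) mod 2 ^ n)"
proof -
  define N :: nat where "N = 2 ^ n"
  have N1: "N \<ge> 1" by (simp add: N_def)
  define t where "t = m - N"
  define j where "j = t mod N"
  have mN: "N \<le> m" using assms by (simp add: N_def)
  have m0: "m \<noteq> 0" using mN N1 by linarith
  have pvm: "pv 0 (G 1 N) m = G 1 N (m - 1)" using m0 by (simp add: pv_def)
  have "G 1 N (m - 1) = 1 - tn j"
  proof (cases "m = N")
    case True
    then have "m - 1 < N" "j = 0" using N1 by (auto simp: j_def t_def)
    then show ?thesis using G1_lt[of "m - 1" n] taun_last[of n] True by (simp add: N_def)
  next
    case False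
    then have m1: "N \<le> m - 1" using mN by linarith
    define s where "s = t - 1"
    have ts: "t = Suc s" using False mN by (simp add: s_def t_def)
    have sm: "m - 1 - N = s" using ts by (simp add: t_def)
    have G: "G 1 N (m - 1) = (if s mod N = N - 1 then 1 else 1 - taun (s mod N))"
      using G1_ge[of n "m - 1"] m1 sm by (simp add: N_def)
    have jm: "j = (if Suc (s mod N) = N then 0 else Suc (s mod N))" unfolding j_def ts by (rule mod_Suc)
    have sl: "s mod N < N" using N1 by simp
    show ?thesis
    proof (cases "Suc (s mod N) = N")
      case True
      then have "s mod N = N - 1" "j = 0" using jm by auto
      then show ?thesis using G by simp
    next
      case False
      then have "j = Suc (s mod N)" "s mod N \<noteq> N - 1" using jm sl by auto
      then show ?thesis using G by (simp add: taun_def)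
    qed
  qed
  then show ?thesis using pvm by (simp add: N_def j_def t_def)
qed

lemma mod_block:
  fixes L t r N :: nat
  assumes "r < L" "0 < L"
  shows "(L * t + r) mod (L * N) = L * (t mod N) + r"
proof -
  have "(L * t + r) div L = t" using assms(1) by simp
  moreover have "(L * t + r) mod L = r" using assms(1) by simp
  ultimately
  show ?thesis using mod_mult2_eq[of "L * t + r" L N] by simp
qed

lemma last_pos_iff:
  assumes "j < N" "r < Lb M"
  shows "Lb M * j + r = Lb M * N - 1 \<longleftrightarrow> j = N - 1 \<and> r = Lb M - 1"
  using assms by (cases "even M") (auto simp: Lb_def)

lemma psib_G:
  assumes M: "M \<ge> 1"
  shows "psib M 0 (G 1 (2 ^ n)) = G M (Lb M * 2 ^ n)"
proof
  fix i
  define N :: nat where "N = 2 ^ n"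
  define L where "L = Lb M"
  define X where "X = G 1 N"
  have N1: "N \<ge> 1" by (simp add: N_def)
  have L0: "0 < L" by (simp add: L_def Lb_pos)
  define m where "m = i div L"
  define r where "r = i mod L"
  have i: "i = L * m + r" by (simp add: m_def r_def)
  have rL: "r < L" using L0 by (simp add: r_def)
  have LN1: "L * N \<ge> 1" using L0 N1 by simp
  have lhs: "psib M 0 X i = blk M (pv 0 X m) (X m) ! r"
    unfolding i using psib_block[of r M 0 X m] rL by (simp add: L_def)
  show "psib M 0 (G 1 (2 ^ n)) i = G M (Lb M * 2 ^ n) i"
    unfolding N_def[symmetric] L_def[symmetric] X_def[symmetric]
  proof (cases "m < N")
    case True
    have iLN: "i < L * N"
    proof -
      have "Suc m \<le> N" using True by simp
      then have "L * Suc m \<le> L * N" by (rule mult_le_mono2)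
      then have "L * m + L \<le> L * N" by simp
      then show ?thesis using i rL by linarith
    qed
    have "psib M 0 X i = psib M 0 taun i"
      using psib_prefix[of N X taun i M 0] G1_prefix[of n] iLN by (simp add: X_def N_def L_def)
    moreover have "G M (L * N) i = lam M (Suc i)" using G_apply[OF LN1, of M i] iLN by simp
    ultimately show "psib M 0 X i = G M (L * N) i" using lam_psib[OF M] by simp
  next
    case False
    then have mN: "N \<le> m" by simp
    define t where "t = m - N"
    define j where "j = t mod N"
    have jN: "j < N" using N1 by (simp add: j_def)
    have Xm: "X m = (if j = N - 1 then 1 else 1 - taun j)"
      using G1_ge[of n m] mN by (simp add: X_def N_def j_def t_def)
    have pvX: "pv 0 X m = 1 - tn j"
      using G1_pv[of n m] mN by (simp add: X_def N_def j_def t_def)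
    have notlt: "\<not> i < L * N"
    proof -
      have "L * N \<le> L * m" using mN by simp
      then show ?thesis using i by linarith
    qed
    have im: "i - L * N = L * t + r" using i mN by (simp add: t_def diff_mult_distrib2)
    have J: "(i - L * N) mod (L * N) = L * j + r" unfolding im j_def using mod_block[OF rL L0] .
    have lamJ: "lam M (Suc (L * j + r)) = blk M (tn j) (taun j) ! r"
      using lam_psib[OF M] psib_block[of r M 0 taun j] rL pv_taun[of j] by (simp add: L_def)
    have g: "G M (L * N) i = (if (i - L * N) mod (L * N) = L * N - 1 then M - lam M (Suc ((i - L * N) mod (L * N))) + 1
        else M - lam M (Suc ((i - L * N) mod (L * N))))"
      using G_apply[OF LN1, of M i] notlt by simp
    have rhs: "G M (L * N) i = (if L * j + r = L * N - 1 then M - blk M (tn j) (taun j) ! r + 1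
        else M - blk M (tn j) (taun j) ! r)"
      using g unfolding J lamJ .
    have tj: "tn j \<le> 1" by (rule tn_le1)
    have tuj: "taun j \<le> 1" using bin_taun by (simp add: bin_def)
    show "psib M 0 X i = G M (L * N) i"
    proof (cases "j = N - 1")
      case True
      then have tu1: "taun j = 1" using taun_last[of n] by (simp add: N_def)
      have "psib M 0 X i = blk M (1 - tn j) 1 ! r" using lhs Xm pvX True by simp
      also have "\<dots> = (if r = L - 1 then M - blk M (tn j) 1 ! r + 1 else M - blk M (tn j) 1 ! r)"
        using blk_plus[OF tj M, of r] rL by (simp add: L_def)
      also have "\<dots> = G M (L * N) i"
        using rhs last_pos_iff[OF jN, of r M] rL True tu1 by (simp add: L_def)
      finally show ?thesis .
    next
      case False
      have "psib M 0 X i = blk M (1 - tn j) (1 - taun j) ! r" using lhs Xm pvX False by simp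
      also have "\<dots> = M - blk M (tn j) (taun j) ! r"
        using blk_conj[of r M "tn j" "taun j"] rL tj tuj M by (simp add: L_def)
      also have "\<dots> = G M (L * N) i"
        using rhs last_pos_iff[OF jN, of r M] rL False by (simp add: L_def)
      finally show ?thesis .
    qed
  qed
qed

lemma Nlen_Suc: "Nlen M (Suc n) = Lb M * 2 ^ n"
  by (simp add: Nlen_def Lb_def)

lemma Nlen_1: "Nlen 1 n = 2 ^ n"
  by (simp add: Nlen_def)

lemma Vseq_limit:
  assumes "\<forall>m. \<exists>y\<in>Vseq M. \<forall>i<m. y i = x i"
  shows "x \<in> Vseq M"
  unfolding Vseq_def mem_Collect_eq
proof (intro allI conjI)
  fix n
  show "lex_le (seq_conj M x) (shift n x)"
  proof (rule ccontr)
    assume "\<not> ?thesis"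
    then have "lex_less (shift n x) (seq_conj M x)" by (simp add: lex_le_iff)
    then obtain p where p: "\<forall>i<p. x (n + i) = M - x i" "x (n + p) < M - x p" by (auto simp: lex_less_def)
    obtain y where y: "y \<in> Vseq M" "\<forall>i<n + p + 1. y i = x i" using assms by blast
    have "lex_less (shift n y) (seq_conj M y)"
      by (rule lex_lessI[of p]) (use p y(2) in auto)
    then show False using Vseq_D(1)[OF y(1), of n] by (simp add: lex_le_iff)
  qed
  show "lex_le (shift n x) x"
  proof (rule ccontr)
    assume "\<not> ?thesis"
    then have "lex_less x (shift n x)" by (simp add: lex_le_iff)
    then obtain p where p: "\<forall>i<p. x i = x (n + i)" "x p < x (n + p)" by (auto simp: lex_less_def)
    obtain y where y: "y \<in> Vseq M" "\<forall>i<n + p + 1. y i = x i" using assms by blast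
    have "lex_less y (shift n y)"
      by (rule lex_lessI[of p]) (use p y(2) in auto)
    then show False using Vseq_D(2)[OF y(1), of n] by (simp add: lex_le_iff)
  qed
qed

lemma Vseq_nonzero:
  assumes M: "M \<ge> 1" and O: "c \<in> Omega M" and V: "c \<in> Vseq M" and nz: "c i \<noteq> 0"
  shows "\<forall>N. \<exists>i\<ge>N. c i \<noteq> 0"
proof (rule ccontr)
  assume "\<not> ?thesis"
  then obtain N where N: "\<forall>i\<ge>N. c i = 0" by auto
  then have s: "shift N c = (\<lambda>_. 0)" by (auto simp: fun_eq_iff)
  have "lex_le (seq_conj M c) (\<lambda>_. 0)" using Vseq_D(1)[OF V, of N] s by simp
  then have "seq_conj M c = (\<lambda>_. 0)"
    unfolding lex_le_def lex_less_def by auto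
  then have "M - c N = 0" by (metis seq_conj_apply)
  moreover have "c N = 0" using N by simp
  ultimately show False using M by simp
qed

lemma bin_le_ones: "bin x \<Longrightarrow> lex_le x (\<lambda>_. 1)"
proof -
  assume b: "bin x"
  show ?thesis
  proof (rule ccontr)
    assume "\<not> lex_le x (\<lambda>_. 1)"
    then have "lex_less (\<lambda>_. 1) x" by (simp add: lex_le_iff)
    then obtain p where p: "1 < x p" by (auto simp: lex_less_def)
    have "x p \<le> 1" using b by (simp add: bin_def)
    then show False using p by simp
  qed
qed

lemma zeros_less: "x 0 = 1 \<Longrightarrow> lex_less (\<lambda>_. 0) x"
  by (intro lex_less_first) simp

lemma realize_psib:
  assumes M: "M \<ge> 1" and b: "bin x" and x0: "x 0 = 1" and V: "x \<in> Vseq 1"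
  shows "1 < (THE q. 1 < q \<and> q \<le> real M + 1 \<and> alpha M q = psib M 0 x)
    \<and> (THE q. 1 < q \<and> q \<le> real M + 1 \<and> alpha M q = psib M 0 x) \<le> real M + 1
    \<and> alpha M (THE q. 1 < q \<and> q \<le> real M + 1 \<and> alpha M q = psib M 0 x) = psib M 0 x"
proof (rule the_alpha[OF M])
  show "psib M 0 x \<in> Omega M" using psib_Omega[OF _ b M] by simp
  show "\<forall>N. \<exists>i\<ge>N. psib M 0 x i \<noteq> 0" using psib_nonzero[OF _ b M] by simp
  have "psib M 0 x \<in> Vseq M" using psib_Vseq_iff[OF M b x0] V by simp
  then show "\<forall>n. lex_le (shift n (psib M 0 x)) (psib M 0 x)" using Vseq_D(2) by blast
qed

definition P1 :: "(nat \<Rightarrow> nat) \<Rightarrow> real" where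
  "P1 x = (THE p. 1 < p \<and> p \<le> 2 \<and> alpha 1 p = x)"

lemma P1_props:
  assumes b: "bin x" and x0: "x 0 = 1" and V: "x \<in> Vseq 1"
  shows "1 < P1 x" "P1 x \<le> 2" "alpha 1 (P1 x) = x"
proof -
  have "\<exists>!p. 1 < p \<and> p \<le> 2 \<and> alpha 1 p = x"
  proof -
    have xO: "x \<in> Omega 1" using b by (simp add: bin_Omega)
    have nz: "\<forall>N. \<exists>i\<ge>N. x i \<noteq> 0" using Vseq_nonzero[of 1 x 0] xO V x0 by simp
    obtain p where p: "1 < p" "p \<le> real 1 + 1" "alpha 1 p = x"
      using realize[of 1 x] xO nz Vseq_D(2)[OF V] by auto
    show ?thesis
    proof (rule ex1I[of _ p])
      show "1 < p \<and> p \<le> 2 \<and> alpha 1 p = x" using p by simp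
      fix p' assume "1 < p' \<and> p' \<le> 2 \<and> alpha 1 p' = x"
      then show "p' = p" using p alpha_inj[of p' 1 p] by simp
    qed
  qed
  then have "1 < P1 x \<and> P1 x \<le> 2 \<and> alpha 1 (P1 x) = x" unfolding P1_def by (rule theI')
  then show "1 < P1 x" "P1 x \<le> 2" "alpha 1 (P1 x) = x" by auto
qed

lemma P1_unique:
  assumes "1 < p" "p \<le> 2" "alpha 1 p = x"
  shows "P1 x = p"
  unfolding P1_def
proof (rule the_equality)
  show "1 < p \<and> p \<le> 2 \<and> alpha 1 p = x" using assms by simp
  fix p' assume "1 < p' \<and> p' \<le> 2 \<and> alpha 1 p' = x"
  then show "p' = p" using assms alpha_inj[of p' 1 p] by simp
qed

lemma Phi_hat_psib:
  assumes M: "M \<ge> 1" and b: "bin x" and x0: "x 0 = 1" and a: "alpha M q = psib M 0 x"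
  shows "Phi_hat M q = P1 x"
  unfolding Phi_hat_def P1_def a Phi_u_psib[OF b x0 M] ..

lemma V1_char:
  assumes "p \<in> Vset 1"
  shows "bin (alpha 1 p)" "alpha 1 p 0 = 1" "alpha 1 p \<in> Vseq 1" "1 < p" "p \<le> 2"
    "P1 (alpha 1 p) = p"
proof -
  have p: "1 < p" "p \<le> 2" and V: "alpha 1 p \<in> Vseq 1" using assms by (auto simp: Vset_def)
  then show "1 < p" "p \<le> 2" "alpha 1 p \<in> Vseq 1" by auto
  have pM: "p \<le> real 1 + 1" using p by simp
  note A = alpha_props[OF p(1) pM]
  show b: "bin (alpha 1 p)" using A(1) by (simp add: bin_Omega)
  obtain i where "alpha 1 p i \<noteq> 0" using A(2) by blast
  moreover have "alpha 1 p i \<le> alpha 1 p 0" using lex_le_0[OF Vseq_D(2)[OF V, of i]] by simp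
  ultimately have "alpha 1 p 0 \<ge> 1" by simp
  moreover have "alpha 1 p 0 \<le> 1" using b by (simp add: bin_def)
  ultimately show "alpha 1 p 0 = 1" by linarith
  show "P1 (alpha 1 p) = p" using P1_unique p by simp
qed

lemma psib_zeros_eq_cyc:
  "cyc (unit_lift M) = psib M 0 (\<lambda>_. 0)"
proof
  fix i
  have u: "unit_lift M = blk M 0 0" by (simp add: unit_lift_def blk_def)
  have l: "length (blk M 0 0) = Lb M" by (simp add: blk_def Lb_def)
  have "psib M 0 (\<lambda>_. 0) i = blk M 0 0 ! (i mod Lb M)" by (simp add: psib_def pv_def)
  then show "cyc (unit_lift M) i = psib M 0 (\<lambda>_. 0) i" unfolding cyc_def u l by simp
qed

lemma psib_zeros_shift:
  assumes M: "M \<ge> 1"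
  shows "lex_le (shift m (psib M 0 (\<lambda>_. 0))) (psib M 0 (\<lambda>_. 0))"
proof -
  define n where "n = m div Lb M"
  define r where "r = m mod Lb M"
  have m: "m = Lb M * n + r" by (simp add: n_def r_def)
  have rL: "r < Lb M" using Lb_pos[of M] by (simp add: r_def)
  show ?thesis
  proof (cases "r = 0")
    case True
    have "shift m (psib M 0 (\<lambda>_. 0)) = psib M (pv 0 (\<lambda>_. 0) n) (shift n (\<lambda>_. 0))"
      using m True psib_shift[of M n 0 "\<lambda>_. 0"] by simp
    moreover have "pv 0 (\<lambda>_. 0::nat) n = 0" by (simp add: pv_def)
    moreover have "shift n (\<lambda>_. 0::nat) = (\<lambda>_. 0)" by (simp add: fun_eq_iff)
    ultimately show ?thesis by simp
  next
    case False
    then have odd: "odd M" "r = 1" using rL by (auto simp: Lb_def split: if_splits)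
    then have m2: "m = 2 * n + 1" using m by (simp add: Lb_def)
    have "psib M 0 (\<lambda>_. 0) (2 * n + 1) = M div 2"
      using psib_block[of 1 M 0 "\<lambda>_. 0" n] odd by (simp add: Lb_def blk_def)
    moreover have "psib M 0 (\<lambda>_. 0) 0 = M div 2 + 1" using odd by (simp add: psib_0 blk_0)
    ultimately have "lex_less (shift m (psib M 0 (\<lambda>_. 0))) (psib M 0 (\<lambda>_. 0))"
      using m2 by (intro lex_less_first) simp
    then show ?thesis by (rule lex_less_imp_le)
  qed
qed

lemma qG_props:
  assumes M: "M \<ge> 1"
  shows "1 < qG M" "qG M \<le> real M + 1" "alpha M (qG M) = psib M 0 (\<lambda>_. 0)"
proof -
  have "1 < (THE q. 1 < q \<and> q \<le> real M + 1 \<and> alpha M q = psib M 0 (\<lambda>_. 0))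
    \<and> (THE q. 1 < q \<and> q \<le> real M + 1 \<and> alpha M q = psib M 0 (\<lambda>_. 0)) \<le> real M + 1
    \<and> alpha M (THE q. 1 < q \<and> q \<le> real M + 1 \<and> alpha M q = psib M 0 (\<lambda>_. 0)) = psib M 0 (\<lambda>_. 0)"
  proof (rule the_alpha[OF M])
    show "psib M 0 (\<lambda>_. 0) \<in> Omega M" using psib_Omega[of 0 "\<lambda>_. 0" M] M by (simp add: bin_def)
    show "\<forall>N. \<exists>i\<ge>N. psib M 0 (\<lambda>_. 0) i \<noteq> 0" using psib_nonzero[of 0 "\<lambda>_. 0" M] M by (simp add: bin_def)
    show "\<forall>n. lex_le (shift n (psib M 0 (\<lambda>_. 0))) (psib M 0 (\<lambda>_. 0))" using psib_zeros_shift[OF M] by blast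
  qed
  then show "1 < qG M" "qG M \<le> real M + 1" "alpha M (qG M) = psib M 0 (\<lambda>_. 0)"
    unfolding qG_def psib_zeros_eq_cyc by auto
qed

definition W :: "nat \<Rightarrow> nat \<Rightarrow> nat" where "W n = G 1 (2 ^ n)"

lemma W_0: "W 0 = (\<lambda>_. 1)"
proof
  fix i
  show "W 0 i = 1"
  proof (cases "i < 1")
    case True then show ?thesis using G1_lt[of i 0] taun0 by (simp add: W_def)
  next
    case False then show ?thesis using G1_ge[of 0 i] by (simp add: W_def)
  qed
qed

lemma W_Suc: "W (Suc n) = psib 1 0 (W n)"
proof -
  have "W (Suc n) = G 1 (Lb 1 * 2 ^ n)" by (simp add: W_def Lb_def)
  then show ?thesis using psib_G[of 1 n] by (simp add: W_def)
qed

lemma W_bin: "bin (W n)" unfolding W_def by (rule bin_G1)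
lemma W_0th: "W n 0 = 1" unfolding W_def by (rule G1_0)

lemma ones_Vseq: "(\<lambda>_. 1) \<in> Vseq 1"
  unfolding Vseq_def mem_Collect_eq
proof
  fix n
  have s: "shift n (\<lambda>_. 1::nat) = (\<lambda>_. 1)" by (simp add: fun_eq_iff)
  have "lex_less (seq_conj 1 (\<lambda>_. 1)) (\<lambda>_. 1)" by (intro lex_less_first) simp
  then show "lex_le (seq_conj 1 (\<lambda>_. 1)) (shift n (\<lambda>_. 1)) \<and> lex_le (shift n (\<lambda>_. 1)) (\<lambda>_. 1)"
    unfolding s by (simp add: lex_less_imp_le)
qed

lemma W_Vseq: "W n \<in> Vseq 1"
proof (induction n)
  case 0 then show ?case using ones_Vseq by (simp add: W_0)
next
  case (Suc n)
  then show ?case unfolding W_Suc using psib_Vseq_iff[of 1 "W n"] W_bin W_0th by simp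
qed

lemma W_prefix: "\<forall>i<2 ^ n. W n i = taun i"
  using G1_prefix by (simp add: W_def)

lemma taun_Vseq: "taun \<in> Vseq 1"
proof (rule Vseq_limit)
  show "\<forall>m. \<exists>y\<in>Vseq 1. \<forall>i<m. y i = taun i"
  proof
    fix m
    have m: "m < 2 ^ m" by (rule less_exp)
    have "\<forall>i<m. W m i = taun i"
    proof (intro allI impI)
      fix i assume "i < m"
      then have "i < 2 ^ m" using m by linarith
      then show "W m i = taun i" using W_prefix[of m] by blast
    qed
    then show "\<exists>y\<in>Vseq 1. \<forall>i<m. y i = taun i" using W_Vseq[of m] by blast
  qed
qed

lemma qprime_Suc_props:
  assumes M: "M \<ge> 1"
  shows "1 < qprime M (Suc n)" "qprime M (Suc n) \<le> real M + 1" "alpha M (qprime M (Suc n)) = psib M 0 (W n)"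
proof -
  have e: "qprime M (Suc n) = (THE q. 1 < q \<and> q \<le> real M + 1 \<and> alpha M q = psib M 0 (W n))"
    using qprime_G[of "Suc n" M] psib_G[OF M, of n] by (simp add: Nlen_Suc W_def)
  show "1 < qprime M (Suc n)" "qprime M (Suc n) \<le> real M + 1" "alpha M (qprime M (Suc n)) = psib M 0 (W n)"
    unfolding e using realize_psib[OF M W_bin W_0th W_Vseq] by auto
qed

lemma alpha_1_2: "alpha 1 2 = (\<lambda>_. 1)"
proof (rule alpha_eqI)
  have v: "val 2 (\<lambda>_. 1) = 1"
  proof -
    have e: "(\<lambda>i. real ((\<lambda>_. 1::nat) i) / (2::real) ^ Suc i) = (\<lambda>i. (1/2::real) ^ Suc i)"
      by (rule ext) (simp only: power_one_over of_nat_1)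
    have "(\<lambda>i. (1/2::real) ^ Suc i) sums 1" by (rule power_half_series)
    then show ?thesis unfolding val_def e by (rule sums_unique[symmetric])
  qed
  have "(\<lambda>_. 1::nat) \<in> Omega 1" by (simp add: Omega_def)
  moreover have "\<forall>N::nat. \<exists>i\<ge>N. (\<lambda>_. 1::nat) i \<noteq> 0"
  proof
    fix N :: nat show "\<exists>i\<ge>N. (\<lambda>_. 1::nat) i \<noteq> 0" by (rule exI[of _ N]) simp
  qed
  ultimately show "(\<lambda>_. 1) \<in> QG_cand 1 2" using v unfolding QG_cand_iff by blast
  show "\<forall>n. val 2 (shift n (\<lambda>_. 1)) \<le> 1"
  proof
    fix n
    have "shift n (\<lambda>_. 1::nat) = (\<lambda>_. 1)" by (simp add: fun_eq_iff)
    then show "val 2 (shift n (\<lambda>_. 1)) \<le> 1" using v by simp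
  qed
qed simp

lemma qprime1_props:
  shows "1 < qprime 1 n" "qprime 1 n \<le> 2" "alpha 1 (qprime 1 n) = W n"
proof -
  have "1 < qprime 1 n \<and> qprime 1 n \<le> 2 \<and> alpha 1 (qprime 1 n) = W n"
  proof (cases n)
    case 0
    then show ?thesis using alpha_1_2 W_0 by (simp add: qprime_def)
  next
    case (Suc m)
    have e: "qprime 1 n = (THE q. 1 < q \<and> q \<le> real 1 + 1 \<and> alpha 1 q = W n)"
      using qprime_G[of n 1, unfolded Nlen_1 W_def[symmetric]] Suc by simp
    have "qprime 1 n = P1 (W n)" unfolding e P1_def by simp
    then show ?thesis using P1_props[OF W_bin W_0th W_Vseq] by simp
  qed
  then show "1 < qprime 1 n" "qprime 1 n \<le> 2" "alpha 1 (qprime 1 n) = W n" by auto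
qed

lemma qT_props:
  assumes M: "M \<ge> 1"
  shows "1 < qT M" "qT M \<le> real M + 1" "alpha M (qT M) = psib M 0 (\<lambda>_. 1)"
  using qprime_Suc_props[OF M, of 0] W_0 by (simp_all add: qT_def)

lemma dom_char:
  assumes M: "M \<ge> 1"
  shows "q \<in> {qG M<..qT M} \<inter> Vset M \<longleftrightarrow>
    (1 < q \<and> q \<le> real M + 1 \<and> (\<exists>x. bin x \<and> x 0 = 1 \<and> x \<in> Vseq 1 \<and> alpha M q = psib M 0 x))"
proof
  note G = qG_props[OF M] and T = qT_props[OF M]
  assume q: "q \<in> {qG M<..qT M} \<inter> Vset M"
  then have q1: "1 < q" "q \<le> real M + 1" and V: "alpha M q \<in> Vseq M"
    and gt: "qG M < q" and le: "q \<le> qT M" by (auto simp: Vset_def)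
  have lo: "lex_less (psib M 0 (\<lambda>_. 0)) (alpha M q)"
    using alpha_less_iff[OF G(1,2) q1] gt G(3) by simp
  have hi: "lex_le (alpha M q) (psib M 0 (\<lambda>_. 1))"
    using alpha_le_iff[OF q1 T(1,2)] le T(3) by simp
  obtain x where x: "bin x" "x 0 = 1" "alpha M q = psib M 0 x"
    using range_psib[OF M alpha_props(1)[OF q1] V lo hi] by blast
  have "x \<in> Vseq 1" using psib_Vseq_iff[OF M x(1,2)] V x(3) by simp
  then show "1 < q \<and> q \<le> real M + 1 \<and> (\<exists>x. bin x \<and> x 0 = 1 \<and> x \<in> Vseq 1 \<and> alpha M q = psib M 0 x)"
    using q1 x by blast
next
  note G = qG_props[OF M] and T = qT_props[OF M]
  assume "1 < q \<and> q \<le> real M + 1 \<and> (\<exists>x. bin x \<and> x 0 = 1 \<and> x \<in> Vseq 1 \<and> alpha M q = psib M 0 x)"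
  then obtain x where q1: "1 < q" "q \<le> real M + 1" and x: "bin x" "x 0 = 1" "x \<in> Vseq 1" "alpha M q = psib M 0 x"
    by blast
  have V: "alpha M q \<in> Vseq M" using psib_Vseq_iff[OF M x(1,2)] x(3,4) by simp
  have "lex_less (psib M 0 (\<lambda>_. 0)) (psib M 0 x)"
    using psib_less_iff[OF bin_const[of 0] x(1) _ M] zeros_less[of x, OF x(2)] by simp
  then have gt: "qG M < q" using alpha_less_iff[OF G(1,2) q1] G(3) x(4) by simp
  have "lex_le (psib M 0 x) (psib M 0 (\<lambda>_. 1))"
    using psib_le_iff[OF x(1) bin_const[of 1] _ M] bin_le_ones[OF x(1)] by simp
  then have le: "q \<le> qT M" using alpha_le_iff[OF q1 T(1,2)] T(3) x(4) by simp
  show "q \<in> {qG M<..qT M} \<inter> Vset M" using gt le q1 V by (simp add: Vset_def)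
qed

lemma P1_Vset:
  assumes "bin x" "x 0 = 1" "x \<in> Vseq 1"
  shows "P1 x \<in> Vset 1"
  using P1_props[OF assms] assms(3) by (simp add: Vset_def)

lemma P1_less_iff:
  assumes "bin x" "x 0 = 1" "x \<in> Vseq 1" "bin y" "y 0 = 1" "y \<in> Vseq 1"
  shows "P1 x < P1 y \<longleftrightarrow> lex_less x y"
  using alpha_less_iff[of "P1 x" 1 "P1 y"] P1_props[OF assms(1-3)] P1_props[OF assms(4-6)] by simp

lemma P1_le_iff:
  assumes "bin x" "x 0 = 1" "x \<in> Vseq 1" "bin y" "y 0 = 1" "y \<in> Vseq 1"
  shows "P1 x \<le> P1 y \<longleftrightarrow> lex_le x y"
  using alpha_le_iff[of "P1 x" 1 "P1 y"] P1_props[OF assms(1-3)] P1_props[OF assms(4-6)] by simp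

theorem lemma3p1:
  fixes M :: nat
  assumes "M \<ge> 1"
  shows "strict_mono_on ({qG M<..qT M} \<inter> Vset M) (Phi_hat M)
       \<and> bij_betw (Phi_hat M) ({qG M<..qT M} \<inter> Vset M) (Vset 1)
       \<and> Phi_hat M (qKL M) = qKL 1
       \<and> (\<forall>n. Phi_hat M ` (Iint M (Suc n) \<inter> Vset M) = Iint 1 n \<inter> Vset 1)"
proof -
  note M = assms
  define S where "S = {qG M<..qT M} \<inter> Vset M"
  have Sx: "\<exists>x. bin x \<and> x 0 = 1 \<and> x \<in> Vseq 1 \<and> alpha M q = psib M 0 x" "1 < q" "q \<le> real M + 1"
    if "q \<in> S" for q using that dom_char[OF M, of q] by (auto simp: S_def)
  have SV: "S \<subseteq> Vset M" by (auto simp: S_def)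
  have smono: "strict_mono_on S (Phi_hat M)"
  proof (rule strict_mono_onI)
    fix r s assume r: "r \<in> S" and s: "s \<in> S" and rs: "r < s"
    obtain x1 where x1: "bin x1" "x1 0 = 1" "x1 \<in> Vseq 1" "alpha M r = psib M 0 x1" using Sx(1)[OF r] by blast
    obtain x2 where x2: "bin x2" "x2 0 = 1" "x2 \<in> Vseq 1" "alpha M s = psib M 0 x2" using Sx(1)[OF s] by blast
    have "lex_less (alpha M r) (alpha M s)" using alpha_less_iff[OF Sx(2,3)[OF r] Sx(2,3)[OF s]] rs by simp
    then have "lex_less x1 x2" using x1(4) x2(4) psib_less_iff[OF x1(1) x2(1) _ M] by simp
    then show "Phi_hat M r < Phi_hat M s"
      using Phi_hat_psib[OF M x1(1,2,4)] Phi_hat_psib[OF M x2(1,2,4)] P1_less_iff[OF x1(1-3) x2(1-3)] by simp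
  qed
  have img: "Phi_hat M ` S = Vset 1"
  proof
    show "Phi_hat M ` S \<subseteq> Vset 1"
    proof
      fix p assume "p \<in> Phi_hat M ` S"
      then obtain q where q: "q \<in> S" "p = Phi_hat M q" by blast
      obtain x where x: "bin x" "x 0 = 1" "x \<in> Vseq 1" "alpha M q = psib M 0 x" using Sx(1)[OF q(1)] by blast
      show "p \<in> Vset 1" using q(2) Phi_hat_psib[OF M x(1,2,4)] P1_Vset[OF x(1-3)] by simp
    qed
    show "Vset 1 \<subseteq> Phi_hat M ` S"
    proof
      fix p assume p: "p \<in> Vset 1"
      define x where "x = alpha 1 p"
      note xc = V1_char[OF p, folded x_def]
      define q where "q = (THE q. 1 < q \<and> q \<le> real M + 1 \<and> alpha M q = psib M 0 x)"
      have q: "1 < q" "q \<le> real M + 1" "alpha M q = psib M 0 x"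
        using realize_psib[OF M xc(1,2,3)] unfolding q_def[symmetric] by auto
      have qS: "q \<in> S" unfolding S_def using dom_char[OF M, of q] q xc by blast
      have "Phi_hat M q = p" using Phi_hat_psib[OF M xc(1,2) q(3)] xc(6) by simp
      then show "p \<in> Phi_hat M ` S" using qS by blast
    qed
  qed
  have bij: "bij_betw (Phi_hat M) S (Vset 1)"
    using strict_mono_on_imp_inj_on[OF smono] img by (simp add: bij_betw_def)
  have kl: "Phi_hat M (qKL M) = qKL 1"
  proof -
    have lM: "(\<lambda>j. lam M (Suc j)) = psib M 0 taun" using lam_psib[OF M] by (simp add: fun_eq_iff)
    have l1: "(\<lambda>j. lam 1 (Suc j)) = taun" using lam1 by (simp add: fun_eq_iff)
    have "alpha M (qKL M) = psib M 0 taun"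
      using realize_psib[OF M bin_taun taun0 taun_Vseq] unfolding qKL_def lM by auto
    then have "Phi_hat M (qKL M) = P1 taun" using Phi_hat_psib[OF M bin_taun taun0] by simp
    moreover have "qKL 1 = P1 taun" unfolding qKL_def l1 P1_def by simp
    ultimately show ?thesis by simp
  qed
  have iii: "Phi_hat M ` (Iint M (Suc n) \<inter> Vset M) = Iint 1 n \<inter> Vset 1" for n
  proof -
    define a where "a = qprime M (Suc (Suc n))"
    define b where "b = qprime M (Suc n)"
    note A = qprime_Suc_props[OF M, of "Suc n", folded a_def]
    note B = qprime_Suc_props[OF M, of n, folded b_def]
    define a1 where "a1 = qprime 1 (Suc n)"
    define b1 where "b1 = qprime 1 n"
    note A1 = qprime1_props[of "Suc n", folded a1_def]
    note B1 = qprime1_props[of n, folded b1_def]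
    have a1P: "a1 = P1 (W (Suc n))" using P1_unique A1 by simp
    have b1P: "b1 = P1 (W n)" using P1_unique B1 by simp
    have IM: "Iint M (Suc n) = {a<..b}" by (simp add: Iint_def a_def b_def)
    have I1: "Iint 1 n = {a1<..b1}" by (simp add: Iint_def a1_def b1_def)
    have key: "(a < q \<and> q \<le> b) \<longleftrightarrow> (a1 < P1 x \<and> P1 x \<le> b1)"
      if q: "1 < q" "q \<le> real M + 1" and x: "bin x" "x 0 = 1" "x \<in> Vseq 1" "alpha M q = psib M 0 x" for q x
    proof -
      have "a < q \<longleftrightarrow> lex_less (psib M 0 (W (Suc n))) (psib M 0 x)"
        using alpha_less_iff[OF A(1,2) q] A(3) x(4) by simp
      also have "\<dots> \<longleftrightarrow> lex_less (W (Suc n)) x" using psib_less_iff[OF W_bin x(1) _ M] by simp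
      also have "\<dots> \<longleftrightarrow> a1 < P1 x" unfolding a1P using P1_less_iff[OF W_bin W_0th W_Vseq x(1-3)] by simp
      finally have 1: "a < q \<longleftrightarrow> a1 < P1 x" .
      have "q \<le> b \<longleftrightarrow> lex_le (psib M 0 x) (psib M 0 (W n))"
        using alpha_le_iff[OF q B(1,2)] B(3) x(4) by simp
      also have "\<dots> \<longleftrightarrow> lex_le x (W n)" using psib_le_iff[OF x(1) W_bin _ M] by simp
      also have "\<dots> \<longleftrightarrow> P1 x \<le> b1" unfolding b1P using P1_le_iff[OF x(1-3) W_bin W_0th W_Vseq] by simp
      finally have 2: "q \<le> b \<longleftrightarrow> P1 x \<le> b1" .
      show ?thesis using 1 2 by simp
    qed
    note G = qG_props[OF M] and T = qT_props[OF M]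
    have Ga: "qG M < a"
    proof -
      have "lex_less (psib M 0 (\<lambda>_. 0)) (psib M 0 (W (Suc n)))"
        using psib_less_iff[OF bin_const[of 0] W_bin _ M] zeros_less[of "W (Suc n)", OF W_0th] by simp
      then show ?thesis using alpha_less_iff[OF G(1,2) A(1,2)] G(3) A(3) by simp
    qed
    have bT: "b \<le> qT M"
    proof -
      have "lex_le (psib M 0 (W n)) (psib M 0 (\<lambda>_. 1))"
        using psib_le_iff[OF W_bin bin_const[of 1] _ M] bin_le_ones[OF W_bin] by simp
      then show ?thesis using alpha_le_iff[OF B(1,2) T(1,2)] T(3) B(3) by simp
    qed
    show ?thesis
    proof
      show "Phi_hat M ` (Iint M (Suc n) \<inter> Vset M) \<subseteq> Iint 1 n \<inter> Vset 1"
      proof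
        fix p assume "p \<in> Phi_hat M ` (Iint M (Suc n) \<inter> Vset M)"
        then obtain q where q: "q \<in> Iint M (Suc n)" "q \<in> Vset M" "p = Phi_hat M q" by blast
        have qab: "a < q" "q \<le> b" using q(1) IM by auto
        have qS: "q \<in> S" unfolding S_def using q(2) qab Ga bT by auto
        obtain x where x: "bin x" "x 0 = 1" "x \<in> Vseq 1" "alpha M q = psib M 0 x" using Sx(1)[OF qS] by blast
        have px: "p = P1 x" using q(3) Phi_hat_psib[OF M x(1,2,4)] by simp
        have "a1 < P1 x \<and> P1 x \<le> b1" using key[OF Sx(2,3)[OF qS] x] qab by simp
        then show "p \<in> Iint 1 n \<inter> Vset 1" using px I1 P1_Vset[OF x(1-3)] by simp
      qed
      show "Iint 1 n \<inter> Vset 1 \<subseteq> Phi_hat M ` (Iint M (Suc n) \<inter> Vset M)"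
      proof
        fix p assume p: "p \<in> Iint 1 n \<inter> Vset 1"
        then have "p \<in> Phi_hat M ` S" using img by simp
        then obtain q where q: "q \<in> S" "p = Phi_hat M q" by blast
        obtain x where x: "bin x" "x 0 = 1" "x \<in> Vseq 1" "alpha M q = psib M 0 x" using Sx(1)[OF q(1)] by blast
        have px: "p = P1 x" using q(2) Phi_hat_psib[OF M x(1,2,4)] by simp
        have "a1 < P1 x \<and> P1 x \<le> b1" using p px I1 by simp
        then have "a < q \<and> q \<le> b" using key[OF Sx(2,3)[OF q(1)] x] by simp
        then have "q \<in> Iint M (Suc n) \<inter> Vset M" using IM SV q(1) by auto
        then show "p \<in> Phi_hat M ` (Iint M (Suc n) \<inter> Vset M)" using q(2) by blast
      qed
    qed
  qed
  show ?thesis using smono bij kl iii unfolding S_def by blast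
qed

end
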